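(* Assume $s_0=-1$. Then $$\sum_{(\lambda,\mu)\in\mathcal P_0^{-1}}\mathrm{wt}_0(\lambda,\mu)=\sum_{\substack{a,b\in\mathbb Z_{\ge0}^N\\|a|=|b|}}p^{-b_0}\prod_{j=0}^{N-1}z_{0,j}^{a_j}\,z_{j,N-1}^{b_j}\,\frac{p^{a_j(a_j-1)(1+s_{j+1})/4+b_j(b_j-1)(1+s_j)/4}}{(p)_{a_j}(p)_{b_j}},$$ i.e. this is the character of the Fock module $\mathcal F_{\Lambda_0}$ of $\mathcal E_{\mathbf s}$.
   Context: Fix $m\ne n$, $N=m+n\ge3$ and a parity sequence $\mathbf s=(s_1,\dots,s_N)\in\{1,-1\}^N$ with exactly $m$ entries $1$, extended by $s_{i+N}=s_i$. Let $z_0,\dots,z_{N-1}$ be formal variables with $z_{i+N}=z_i$, $p=z_0z_1\cdots z_{N-1}$, $z_{i,j}=\prod_{t=i}^jz_t$ for $i\le j$, $(p)_s=\prod_{i=1}^s(1-p^i)$; for $a=(a_0,\dots,a_{N-1})$ put $|a|=\sum a_i$ and $a_{i+N}=a_i$. For $k\in\mathbb Z$ and $\epsilon\in\{1,-1\}$, $\mathcal P_k^\epsilon$ is the set of pairs $(\lambda,\mu)$ of weakly decreasing sequences $\lambda=(\lambda_1,\lambda_2,\dots)$, $\mu=(\mu_1,\mu_2,\dots)$ of non-negative integers, finitely many nonzero, such that: $\mu_j=0$ whenever $\lambda_j=0$; $\lambda_j=\lambda_{j+1}$ is allowed only if $s_{k+\lambda_j}=\epsilon$ or $\lambda_j=\mu_j=0$;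 $\mu_j=\mu_{j+1}$ is allowed only if $s_{k-\mu_j}=\epsilon$ or $\mu_j=\lambda_{j+1}=0$. Its colour weight is $\mathrm{wt}_k(\lambda,\mu)=\prod_{j\ge1}\prod_{t=0}^{\lambda_j-1}z_{k+t}\cdot\prod_{j\ge1}\prod_{t=1}^{\mu_j}z_{k-t}$ (the number of boxes of each colour mod $N$ in the associated diagram). The set $\mathcal P_0^{-1}$ indexes a basis of the Fock module $\mathcal F_{\Lambda_0}$ and $\mathrm{wt}_0$ is the grading with the highest weight vector of degree $1$. *)

theory Defs
  imports "HOL-Analysis.Analysis" "HOL-Computational_Algebra.Formal_Power_Series"
begin

definition parity_seq :: "nat \<Rightarrow> nat \<Rightarrow> (int \<Rightarrow> int) \<Rightarrow> bool" where
  "parity_seq N m s \<longleftrightarrow> (\<forall>i. s i = 1 \<or> s i = -1) \<and> (\<forall>i. s (i + int N) = s i)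
      \<and> card {i \<in> {1..int N}. s i = 1} = m"

text \<open>Partitions are encoded as functions nat => nat; the paper's part
  lambda_j (j >= 1) is lam (j - 1).\<close>
definition partition_seq :: "(nat \<Rightarrow> nat) \<Rightarrow> bool" where
  "partition_seq lam \<longleftrightarrow> (\<forall>j. lam (Suc j) \<le> lam j) \<and> finite {j. lam j \<noteq> 0}"

definition Pset :: "(int \<Rightarrow> int) \<Rightarrow> int \<Rightarrow> int \<Rightarrow> ((nat \<Rightarrow> nat) \<times> (nat \<Rightarrow> nat)) set" where
  "Pset s k eps = {(lam, mu). partition_seq lam \<and> partition_seq mu
      \<and> (\<forall>j. lam j = 0 \<longrightarrow> mu j = 0)
      \<and> (\<forall>j. lam j = lam (Suc j) \<longrightarrow> s (k + int (lam j)) = eps \<or> (lam j = 0 \<and> mu j = 0))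
      \<and> (\<forall>j. mu j = mu (Suc j) \<longrightarrow> s (k - int (mu j)) = eps \<or> (mu j = 0 \<and> lam (Suc j) = 0))}"

text \<open>Colour weight wt_k: exponent of z_c (0 <= c < N) in the monomial
  prod_j prod_{t=0}^{lam_j - 1} z_{k+t} * prod_j prod_{t=1}^{mu_j} z_{k-t}.\<close>
definition wt_exp :: "nat \<Rightarrow> int \<Rightarrow> (nat \<Rightarrow> nat) \<Rightarrow> (nat \<Rightarrow> nat) \<Rightarrow> nat \<Rightarrow> nat" where
  "wt_exp N k lam mu c =
     (\<Sum>j\<in>{j. lam j \<noteq> 0}. card {t. t < lam j \<and> (k + int t) mod int N = int c})
   + (\<Sum>j\<in>{j. mu j \<noteq> 0}. card {t. 1 \<le> t \<and> t \<le> mu j \<and> (k - int t) mod int N = int c})"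

definition qpoch :: "nat \<Rightarrow> real fps" where
  "qpoch r = (\<Prod>i\<in>{1..r}. 1 - fps_X ^ i)"

text \<open>The summand of the right-hand side for a given (a,b) is
  z^(Eexp a b) * p^(Qexp a b) * Fser a b (p), where Eexp is the (integer)
  exponent vector of p^(-b_0) prod_j z_{0,j}^{a_j} z_{j,N-1}^{b_j}, Qexp the
  exponent of p coming from the quadratic terms, and Fser the power series
  1 / prod_j (p)_{a_j} (p)_{b_j} in the single variable p = z_0 ... z_{N-1}.\<close>
definition Eexp :: "nat \<Rightarrow> (nat \<Rightarrow> nat) \<Rightarrow> (nat \<Rightarrow> nat) \<Rightarrow> nat \<Rightarrow> int" where
  "Eexp N a b t = (\<Sum>j\<in>{j. j < N \<and> t \<le> j}. int (a j)) + (\<Sum>j\<in>{j. j < N \<and> j \<le> t}. int (b j))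
      - int (b 0)"

definition Qexp :: "nat \<Rightarrow> (int \<Rightarrow> int) \<Rightarrow> (nat \<Rightarrow> nat) \<Rightarrow> (nat \<Rightarrow> nat) \<Rightarrow> int" where
  "Qexp N s a b = (\<Sum>j<N. (int (a j) * (int (a j) - 1) * (1 + s (int j + 1))) div 4
                         + (int (b j) * (int (b j) - 1) * (1 + s (int j))) div 4)"

definition Fser :: "nat \<Rightarrow> (nat \<Rightarrow> nat) \<Rightarrow> (nat \<Rightarrow> nat) \<Rightarrow> real fps" where
  "Fser N a b = inverse (\<Prod>j<N. qpoch (a j) * qpoch (b j))"

text \<open>Index set for the coefficient of z^d on the right-hand side: triples
  (a,b,r) with a,b in Z_{>=0}^N (support in {0..<N}), |a| = |b|, and the
  monomial z^(Eexp a b) p^(Qexp a b + r) equal to z^d.\<close>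
definition rhs_index :: "nat \<Rightarrow> (int \<Rightarrow> int) \<Rightarrow> (nat \<Rightarrow> nat) \<Rightarrow>
    ((nat \<Rightarrow> nat) \<times> (nat \<Rightarrow> nat) \<times> nat) set" where
  "rhs_index N s d = {(a, b, r). (\<forall>t\<ge>N. a t = 0) \<and> (\<forall>t\<ge>N. b t = 0)
      \<and> (\<Sum>j<N. a j) = (\<Sum>j<N. b j)
      \<and> (\<forall>t<N. int (d t) = Eexp N a b t + Qexp N s a b + int r)}"

end

theory Submission
  imports Defs
begin

definition gf :: "'a set \<Rightarrow> ('a \<Rightarrow> nat) \<Rightarrow> real fps" where
  "gf X f = Abs_fps (\<lambda>i. real (card {x\<in>X. f x = i}))"

lemma fiber_le_finite:
  fixes f :: "'a \<Rightarrow> nat"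
  assumes "\<forall>i. finite {x\<in>X. f x = i}"
  shows "finite {x\<in>X. f x \<le> R}"
proof -
  have "{x\<in>X. f x \<le> R} = (\<Union>i\<in>{..R}. {x\<in>X. f x = i})" by auto
  then show ?thesis using assms by simp
qed

lemma pair_count:
  fixes f :: "'a \<Rightarrow> nat" and g :: "'b \<Rightarrow> nat"
  assumes fX: "\<forall>i. finite {x\<in>X. f x = i}" and fY: "\<forall>i. finite {y\<in>Y. g y = i}"
  shows "real (card {(x,y) \<in> X \<times> Y. f x + g y = R}) = fps_nth (gf X f * gf Y g) R"
proof -
  have eq: "{(x,y) \<in> X \<times> Y. f x + g y = R} = (\<Union>i\<in>{0..R}. {x\<in>X. f x = i} \<times> {y\<in>Y. g y = R - i})"
    by auto
  have "card {(x,y) \<in> X \<times> Y. f x + g y = R} = (\<Sum>i\<in>{0..R}. card ({x\<in>X. f x = i} \<times> {y\<in>Y. g y = R - i}))"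
    unfolding eq
    by (rule card_UN_disjoint) (use fX fY in auto)
  also have "\<dots> = (\<Sum>i\<in>{0..R}. card {x\<in>X. f x = i} * card {y\<in>Y. g y = R - i})"
    by (simp add: card_cartesian_product)
  finally show ?thesis
    by (simp add: fps_mult_nth gf_def)
qed

lemma PiE_fiber_finite:
  fixes w :: "'i \<Rightarrow> 'a \<Rightarrow> nat"
  assumes "finite I" "\<forall>i\<in>I. \<forall>k. finite {x\<in>C i. w i x = k}"
  shows "finite {T \<in> PiE I C. (\<Sum>i\<in>I. w i (T i)) = R}"
proof -
  have "{T \<in> PiE I C. (\<Sum>i\<in>I. w i (T i)) = R} \<subseteq> PiE I (\<lambda>i. {x\<in>C i. w i x \<le> R})"
  proof
    fix T assume T: "T \<in> {T \<in> PiE I C. (\<Sum>i\<in>I. w i (T i)) = R}"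
    show "T \<in> PiE I (\<lambda>i. {x\<in>C i. w i x \<le> R})"
    proof (rule PiE_I)
      fix i assume i: "i \<in> I"
      have "w i (T i) \<le> (\<Sum>i\<in>I. w i (T i))"
        by (rule member_le_sum) (use i assms in auto)
      then show "T i \<in> {x\<in>C i. w i x \<le> R}" using T i by (auto simp: PiE_iff)
    next
      fix i assume "i \<notin> I" then show "T i = undefined" using T by (auto simp: PiE_iff extensional_def)
    qed
  qed
  moreover have "finite (PiE I (\<lambda>i. {x\<in>C i. w i x \<le> R}))"
    by (rule finite_PiE) (use assms in \<open>auto intro: fiber_le_finite\<close>)
  ultimately show ?thesis by (rule finite_subset)
qed

lemma PiE_count:
  fixes w :: "'i \<Rightarrow> 'a \<Rightarrow> nat"
  assumes "finite I" "\<forall>i\<in>I. \<forall>k. finite {x\<in>C i. w i x = k}"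
  shows "real (card {T \<in> PiE I C. (\<Sum>i\<in>I. w i (T i)) = R}) = fps_nth (\<Prod>i\<in>I. gf (C i) (w i)) R"
  using assms
proof (induction I arbitrary: R rule: finite_induct)
  case empty
  have "{T \<in> PiE {} C. (\<Sum>i\<in>{}. w i (T i)) = R} = (if R = 0 then {\<lambda>_. undefined} else {})"
    by auto
  then show ?case by simp
next
  case (insert a I)
  let ?S = "{T \<in> PiE (insert a I) C. (\<Sum>i\<in>insert a I. w i (T i)) = R}"
  let ?P = "{(x,T) \<in> C a \<times> PiE I C. w a x + (\<Sum>i\<in>I. w i (T i)) = R}"
  have bij: "bij_betw (\<lambda>(x,T). T(a:=x)) ?P ?S"
  proof (rule bij_betw_byWitness[where f' = "\<lambda>T. (T a, T(a:=undefined))"])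
    show "\<forall>p\<in>?P. (\<lambda>T. (T a, T(a:=undefined))) ((\<lambda>(x,T). T(a:=x)) p) = p"
    proof
      fix p assume p: "p \<in> ?P"
      then obtain x T where pe: "p = (x,T)" and T: "T \<in> PiE I C" by auto
      then have "T a = undefined" using insert.hyps by (simp add: PiE_def extensional_def)
      then show "(\<lambda>T. (T a, T(a:=undefined))) ((\<lambda>(x,T). T(a:=x)) p) = p" using pe by (simp add: fun_eq_iff)
    qed
    show "\<forall>T\<in>?S. (\<lambda>(x,T). T(a:=x)) ((\<lambda>T. (T a, T(a:=undefined))) T) = T"
      by auto
    show "(\<lambda>(x,T). T(a:=x)) ` ?P \<subseteq> ?S"
    proof
      fix y assume "y \<in> (\<lambda>(x,T). T(a:=x)) ` ?P"
      then obtain x T where y: "y = T(a:=x)" and h: "x \<in> C a" "T \<in> PiE I C" "w a x + (\<Sum>i\<in>I. w i (T i)) = R"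
        by auto
      moreover have "(\<Sum>i\<in>I. w i ((T(a:=x)) i)) = (\<Sum>i\<in>I. w i (T i))"
        using insert.hyps by (intro sum.cong) auto
      ultimately show "y \<in> ?S" using insert.hyps by (auto simp: PiE_iff)
    qed
    show "(\<lambda>T. (T a, T(a:=undefined))) ` ?S \<subseteq> ?P"
    proof
      fix y assume "y \<in> (\<lambda>T. (T a, T(a:=undefined))) ` ?S"
      then obtain T where y: "y = (T a, T(a:=undefined))" and T: "T \<in> PiE (insert a I) C" "(\<Sum>i\<in>insert a I. w i (T i)) = R"
        by auto
      have "(\<Sum>i\<in>I. w i ((T(a:=undefined)) i)) = (\<Sum>i\<in>I. w i (T i))"
        using insert.hyps by (intro sum.cong) auto
      then show "y \<in> ?P"
        using T insert.hyps y by (auto simp: PiE_iff extensional_def)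
    qed
  qed
  have "card ?S = card ?P" using bij by (rule bij_betw_same_card[symmetric])
  moreover have "real (card ?P) = fps_nth (gf (C a) (w a) * gf (PiE I C) (\<lambda>T. \<Sum>i\<in>I. w i (T i))) R"
    by (rule pair_count) (use insert.prems insert.hyps PiE_fiber_finite in auto)
  moreover have "gf (PiE I C) (\<lambda>T. \<Sum>i\<in>I. w i (T i)) = (\<Prod>i\<in>I. gf (C i) (w i))"
    using insert by (simp add: fps_eq_iff gf_def)
  ultimately show ?case using insert.hyps by simp
qed

lemma count_image_inj:
  assumes "inj f" shows "count (image_mset f X) (f x) = count X x"
proof -
  have "f -` {f x} = {x}" using assms by (auto dest: injD)
  then show ?thesis by (cases "x \<in># X") (auto simp: count_image_mset not_in_iff)
qed

lemma inj_image_mset_inj: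
  assumes "inj f" shows "inj (image_mset f)"
proof (rule injI)
  fix X Y assume "image_mset f X = image_mset f Y"
  then have "count X x = count Y x" for x using count_image_inj[OF assms, of X x] count_image_inj[OF assms, of Y x] by simp
  then show "X = Y" by (simp add: multiset_eq_iff)
qed

lemma mem_le_sum_mset: "(q::nat) \<in># X \<Longrightarrow> q \<le> sum_mset X"
proof -
  assume "q \<in># X"
  then obtain Y where "X = add_mset q Y" by (blast dest: multi_member_split)
  then show ?thesis by simp
qed

lemma sum_mset_Suc: "sum_mset (image_mset Suc X) = sum_mset X + size X"
  by (induction X) auto

lemma image_Suc_pred: "0 \<notin># X \<Longrightarrow> image_mset Suc (image_mset (\<lambda>q. q - 1) X) = X"
proof -
  assume "0 \<notin># X"
  then have "image_mset (Suc \<circ> (\<lambda>q. q - 1)) X = image_mset id X"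
  proof (intro image_mset_cong)
    fix x assume "x \<in># X"
    have "x \<noteq> 0"
    proof
      assume "x = 0" with \<open>x \<in># X\<close> \<open>0 \<notin># X\<close> show False by simp
    qed
    then show "(Suc \<circ> (\<lambda>q. q - 1)) x = id x" by simp
  qed
  then show ?thesis by (simp add: multiset.map_comp)
qed

lemma size_le_sum_mset: "0 \<notin># X \<Longrightarrow> size X \<le> sum_mset (X::nat multiset)"
proof (induction X)
  case (add x X) then show ?case by (cases x) auto
qed auto

definition Mset :: "nat \<Rightarrow> bool \<Rightarrow> nat multiset set" where
  "Mset k \<delta> = {X. size X = k \<and> (\<delta> \<longrightarrow> (\<forall>q. count X q \<le> 1))}"

definition cnt :: "bool \<Rightarrow> nat \<Rightarrow> nat \<Rightarrow> nat" where
  "cnt \<delta> k R = card {X \<in> Mset k \<delta>. sum_mset X = R}"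

lemma Mset_fiber_finite: "finite {X \<in> Mset k \<delta>. sum_mset X = R}"
proof (rule finite_subset)
  show "{X \<in> Mset k \<delta>. sum_mset X = R} \<subseteq> multisets_of_size {..R} k"
    by (auto simp: Mset_def multisets_of_size_def dest: mem_le_sum_mset)
qed auto

lemma cnt_0: "cnt \<delta> 0 R = (if R = 0 then 1 else 0)"
proof -
  have "{X \<in> Mset 0 \<delta>. sum_mset X = R} = (if R = 0 then {{#}} else {})"
    by (auto simp: Mset_def)
  then show ?thesis by (simp add: cnt_def)
qed

lemma split_zero:
  "{X \<in> Mset k \<delta>. sum_mset X = R} = {X \<in> Mset k \<delta>. sum_mset X = R \<and> 0 \<in># X} \<union> {X \<in> Mset k \<delta>. sum_mset X = R \<and> 0 \<notin># X}"
  by auto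

lemma card_nozero:
  "card {X \<in> Mset k \<delta>. sum_mset X = R \<and> 0 \<notin># X} = (if k \<le> R then cnt \<delta> k (R - k) else 0)"
proof (cases "k \<le> R")
  case True
  have "{X \<in> Mset k \<delta>. sum_mset X = R \<and> 0 \<notin># X} = image_mset Suc ` {X \<in> Mset k \<delta>. sum_mset X = R - k}"
  proof (intro equalityI subsetI)
    fix X assume X: "X \<in> {X \<in> Mset k \<delta>. sum_mset X = R \<and> 0 \<notin># X}"
    let ?Y = "image_mset (\<lambda>q. q - 1) X"
    have XY: "X = image_mset Suc ?Y" using X by (intro image_Suc_pred[symmetric]) auto
    have "?Y \<in> Mset k \<delta>"
    proof -
      have "count ?Y q = count X (Suc q)" for q
        using XY count_image_inj[of Suc ?Y q] by simp
      then show ?thesis using X by (auto simp: Mset_def)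
    qed
    moreover have "sum_mset ?Y = R - k"
      using X sum_mset_Suc[of ?Y] XY by (auto simp: Mset_def)
    ultimately show "X \<in> image_mset Suc ` {X \<in> Mset k \<delta>. sum_mset X = R - k}"
      using XY by blast
  next
    fix X assume "X \<in> image_mset Suc ` {X \<in> Mset k \<delta>. sum_mset X = R - k}"
    then obtain Y where XY: "X = image_mset Suc Y" and Y: "Y \<in> Mset k \<delta>" "sum_mset Y = R - k" by auto
    have c0: "count X 0 = 0" using XY by (auto simp: count_eq_zero_iff)
    have cS: "count X (Suc q) = count Y q" for q using XY count_image_inj[of Suc Y q] by simp
    have "\<delta> \<longrightarrow> (\<forall>q. count X q \<le> 1)"
    proof (intro impI allI)
      fix q assume "\<delta>" then show "count X q \<le> 1" using Y c0 cS by (cases q) (auto simp: Mset_def)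
    qed
    then show "X \<in> {X \<in> Mset k \<delta>. sum_mset X = R \<and> 0 \<notin># X}"
      using XY Y True sum_mset_Suc[of Y] by (auto simp: Mset_def)
  qed
  moreover have "card (image_mset Suc ` {X \<in> Mset k \<delta>. sum_mset X = R - k}) = cnt \<delta> k (R - k)"
    unfolding cnt_def by (rule card_image) (meson inj_image_mset_inj inj_Suc inj_on_subset subset_UNIV)
  ultimately show ?thesis using True by simp
next
  case False
  have e: "{X \<in> Mset k \<delta>. sum_mset X = R \<and> 0 \<notin># X} = {}"
    using False size_le_sum_mset by (force simp: Mset_def)
  show ?thesis using False unfolding e by simp
qed

lemma card_zero_F:
  "card {X \<in> Mset (Suc k) False. sum_mset X = R \<and> 0 \<in># X} = cnt False k R"
proof -
  have "{X \<in> Mset (Suc k) False. sum_mset X = R \<and> 0 \<in># X} = add_mset 0 ` {X \<in> Mset k False. sum_mset X = R}"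
  proof (intro equalityI subsetI)
    fix X assume X: "X \<in> {X \<in> Mset (Suc k) False. sum_mset X = R \<and> 0 \<in># X}"
    then have "X = add_mset 0 (X - {#0#})" by simp
    moreover have "X - {#0#} \<in> {X \<in> Mset k False. sum_mset X = R}"
      using X by (auto simp: Mset_def size_Diff_singleton sum_mset.remove)
    ultimately show "X \<in> add_mset 0 ` {X \<in> Mset k False. sum_mset X = R}" by blast
  qed (auto simp: Mset_def)
  moreover have "card (add_mset 0 ` {X \<in> Mset k False. sum_mset X = R}) = cnt False k R"
    unfolding cnt_def by (rule card_image) (simp add: inj_on_def)
  ultimately show ?thesis by simp
qed

lemma card_zero_T:
  "card {X \<in> Mset (Suc k) True. sum_mset X = R \<and> 0 \<in># X} = (if k \<le> R then cnt True k (R - k) else 0)"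
proof -
  have "{X \<in> Mset (Suc k) True. sum_mset X = R \<and> 0 \<in># X} = add_mset 0 ` {X \<in> Mset k True. sum_mset X = R \<and> 0 \<notin># X}"
  proof (intro equalityI subsetI)
    fix X assume X: "X \<in> {X \<in> Mset (Suc k) True. sum_mset X = R \<and> 0 \<in># X}"
    then have c1: "count X 0 \<le> 1" and c2: "count X 0 \<noteq> 0" by (auto simp: Mset_def)
    then have c: "count X 0 = 1" by linarith
    then have e: "X = add_mset 0 (X - {#0#})" by (metis insert_DiffM count_eq_zero_iff zero_neq_one)
    have "count (X - {#0#}) 0 = 0" using c by simp
    moreover have "count (X - {#0#}) q \<le> count X q" for q by simp
    ultimately have h2: "\<forall>q. count (X - {#0#}) q \<le> 1"
      using X by (auto simp: Mset_def intro: le_trans)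
    have h1: "0 \<notin># X - {#0#}" using c by (simp add: not_in_iff)
    have h3: "size (X - {#0#}) = k" using X by (simp add: Mset_def size_Diff_singleton)
    have "sum_mset X = sum_mset (add_mset 0 (X - {#0#}))" using e by simp
    then have h4: "sum_mset (X - {#0#}) = R" using X by simp
    have "X - {#0#} \<in> {X \<in> Mset k True. sum_mset X = R \<and> 0 \<notin># X}"
      using h1 h2 h3 h4 by (simp add: Mset_def)
    then show "X \<in> add_mset 0 ` {X \<in> Mset k True. sum_mset X = R \<and> 0 \<notin># X}" using e by blast
  next
    fix X assume "X \<in> add_mset 0 ` {X \<in> Mset k True. sum_mset X = R \<and> 0 \<notin># X}"
    then obtain Y where "X = add_mset 0 Y" "Y \<in> Mset k True" "sum_mset Y = R" "0 \<notin># Y" by auto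
    then show "X \<in> {X \<in> Mset (Suc k) True. sum_mset X = R \<and> 0 \<in># X}"
      by (auto simp: Mset_def) (metis count_eq_zero_iff le_refl)
  qed
  moreover have "card (add_mset 0 ` {X \<in> Mset k True. sum_mset X = R \<and> 0 \<notin># X}) = card {X \<in> Mset k True. sum_mset X = R \<and> 0 \<notin># X}"
    by (rule card_image) (simp add: inj_on_def)
  ultimately show ?thesis using card_nozero[of k True R] by simp
qed

lemma cnt_rec:
  "cnt \<delta> (Suc k) R = (if \<delta> then (if k \<le> R then cnt True k (R - k) else 0) else cnt False k R)
      + (if Suc k \<le> R then cnt \<delta> (Suc k) (R - Suc k) else 0)"
proof -
  have "cnt \<delta> (Suc k) R = card {X \<in> Mset (Suc k) \<delta>. sum_mset X = R \<and> 0 \<in># X} + card {X \<in> Mset (Suc k) \<delta>. sum_mset X = R \<and> 0 \<notin># X}"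
    unfolding cnt_def
    by (subst split_zero, rule card_Un_disjoint) (auto intro: finite_subset[OF _ Mset_fiber_finite])
  then show ?thesis using card_zero_T card_zero_F card_nozero by (cases \<delta>) auto
qed

definition G :: "nat \<Rightarrow> bool \<Rightarrow> real fps" where
  "G k \<delta> = gf (Mset k \<delta>) sum_mset"

lemma G_nth: "fps_nth (G k \<delta>) R = real (cnt \<delta> k R)"
  by (simp add: G_def gf_def cnt_def)

lemma G_rec: "G (Suc k) \<delta> * (1 - fps_X ^ Suc k) = (if \<delta> then fps_X ^ k * G k True else G k False)"
proof -
  have "G (Suc k) \<delta> = (if \<delta> then fps_X ^ k * G k True else G k False) + fps_X ^ Suc k * G (Suc k) \<delta>"
  proof (rule fps_ext)
    fix R
    show "fps_nth (G (Suc k) \<delta>) R = fps_nth ((if \<delta> then fps_X ^ k * G k True else G k False) + fps_X ^ Suc k * G (Suc k) \<delta>) R"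
      unfolding G_nth fps_add_nth fps_X_power_mult_nth cnt_rec[of \<delta> k R]
      by (cases \<delta>) (auto simp: G_nth fps_X_power_mult_nth)
  qed
  then show ?thesis by (simp add: algebra_simps)
qed

lemma qpoch_Suc: "qpoch (Suc k) = qpoch k * (1 - fps_X ^ Suc k)"
  by (simp add: qpoch_def atLeastAtMostSuc_conv mult.commute)

lemma G_qpoch: "G k \<delta> * qpoch k = (if \<delta> then fps_X ^ (k * (k - 1) div 2) else 1)"
proof (induction k arbitrary: \<delta>)
  case 0
  have "G 0 \<delta> = 1" by (simp add: fps_eq_iff G_nth cnt_0)
  then show ?case by (simp add: qpoch_def)
next
  case (Suc k)
  have "G (Suc k) \<delta> * qpoch (Suc k) = (G (Suc k) \<delta> * (1 - fps_X ^ Suc k)) * qpoch k"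
    by (simp add: qpoch_Suc algebra_simps)
  also have "\<dots> = (if \<delta> then fps_X ^ k * (G k True * qpoch k) else G k False * qpoch k)"
    by (simp only: G_rec) (simp add: mult.assoc)
  also have "\<dots> = (if \<delta> then fps_X ^ (Suc k * (Suc k - 1) div 2) else 1)"
  proof -
    have "k + k * (k - 1) div 2 = Suc k * (Suc k - 1) div 2"
      by (cases k) auto
    then show ?thesis using Suc.IH[of True] Suc.IH[of False] by (simp add: power_add[symmetric])
  qed
  finally show ?case .
qed

definition msplit :: "nat \<Rightarrow> (nat \<Rightarrow> nat) \<Rightarrow> (nat \<Rightarrow> nat) \<Rightarrow> nat multiset \<Rightarrow> nat \<Rightarrow> nat multiset" where
  "msplit N cls dec X = (\<lambda>j. if j < N then image_mset dec (filter_mset (\<lambda>v. cls v = j) X) else undefined)"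

definition mjoin :: "nat \<Rightarrow> (nat \<Rightarrow> nat \<Rightarrow> nat) \<Rightarrow> (nat \<Rightarrow> nat multiset) \<Rightarrow> nat multiset" where
  "mjoin N enc T = (\<Sum>j<N. image_mset (enc j) (T j))"

definition decomp_ok :: "nat \<Rightarrow> (nat \<Rightarrow> nat \<Rightarrow> nat) \<Rightarrow> (nat \<Rightarrow> nat) \<Rightarrow> (nat \<Rightarrow> nat) \<Rightarrow> nat set \<Rightarrow> bool" where
  "decomp_ok N enc cls dec D \<longleftrightarrow> (\<forall>j<N. \<forall>q. enc j q \<in> D \<and> cls (enc j q) = j \<and> dec (enc j q) = q)
     \<and> (\<forall>v\<in>D. cls v < N \<and> enc (cls v) (dec v) = v)"

lemma count_image_enc:
  assumes ok: "decomp_ok N enc cls dec D" and i: "i < N"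
  shows "count (image_mset (enc i) M) v = (if v \<in> D \<and> cls v = i then count M (dec v) else 0)"
proof -
  have pre: "enc i -` {v} = (if v \<in> D \<and> cls v = i then {dec v} else {})"
    using ok i unfolding decomp_ok_def by (auto; metis)+
  show ?thesis
    by (cases "dec v \<in># M") (simp_all add: count_image_mset pre not_in_iff)
qed

lemma count_mjoin:
  assumes ok: "decomp_ok N enc cls dec D"
  shows "count (mjoin N enc T) v = (if v \<in> D then count (T (cls v)) (dec v) else 0)"
proof -
  have "count (mjoin N enc T) v = (\<Sum>i<N. count (image_mset (enc i) (T i)) v)"
    by (simp add: mjoin_def count_sum)
  also have "\<dots> = (\<Sum>i<N. if v \<in> D \<and> cls v = i then count (T i) (dec v) else 0)"
    using count_image_enc[OF ok] by simp
  also have "\<dots> = (if v \<in> D then count (T (cls v)) (dec v) else 0)"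
  proof (cases "v \<in> D")
    case True
    then have "cls v < N" using ok by (simp add: decomp_ok_def)
    then show ?thesis using True by (simp add: sum.delta')
  qed simp
  finally show ?thesis .
qed

lemma count_msplit:
  assumes ok: "decomp_ok N enc cls dec D" and X: "set_mset X \<subseteq> D" and j: "j < N"
  shows "count (msplit N cls dec X j) q = count X (enc j q)"
proof -
  have pre: "dec -` {q} \<inter> {a. a \<in># X \<and> cls a = j} = (if enc j q \<in># X then {enc j q} else {})"
    using ok X j unfolding decomp_ok_def by auto
  show ?thesis using j ok
    by (cases "enc j q \<in># X") (simp_all add: msplit_def count_image_mset pre decomp_ok_def not_in_iff)
qed

lemma mjoin_msplit:
  assumes ok: "decomp_ok N enc cls dec D" and X: "set_mset X \<subseteq> D"
  shows "mjoin N enc (msplit N cls dec X) = X"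
proof (rule multiset_eqI)
  fix v
  show "count (mjoin N enc (msplit N cls dec X)) v = count X v"
  proof (cases "v \<in> D")
    case True
    then have "cls v < N" "enc (cls v) (dec v) = v" using ok by (auto simp: decomp_ok_def)
    then show ?thesis using True by (simp add: count_mjoin[OF ok] count_msplit[OF ok X])
  next
    case False
    then have "v \<notin># X" using X by auto
    then show ?thesis using False by (simp add: count_mjoin[OF ok] not_in_iff)
  qed
qed

lemma set_mjoin:
  assumes ok: "decomp_ok N enc cls dec D"
  shows "set_mset (mjoin N enc T) \<subseteq> D"
proof
  fix v assume "v \<in># mjoin N enc T"
  then have "count (mjoin N enc T) v \<noteq> 0" by (simp add: not_in_iff[symmetric])
  then show "v \<in> D" by (simp add: count_mjoin[OF ok] split: if_splits)
qed

lemma msplit_mjoin: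
  assumes ok: "decomp_ok N enc cls dec D" and T: "T \<in> extensional {..<N}"
  shows "msplit N cls dec (mjoin N enc T) = T"
proof (rule ext)
  fix j
  show "msplit N cls dec (mjoin N enc T) j = T j"
  proof (cases "j < N")
    case True
    have "count (msplit N cls dec (mjoin N enc T) j) q = count (T j) q" for q
      using ok True by (simp add: count_msplit[OF ok set_mjoin[OF ok]] count_mjoin[OF ok] decomp_ok_def)
    then show ?thesis by (simp add: multiset_eq_iff)
  next
    case False
    then show ?thesis using T by (simp add: msplit_def extensional_def)
  qed
qed

lemma msplit_ext: "msplit N cls dec X \<in> extensional {..<N}"
  by (simp add: msplit_def extensional_def)

lemma sum_mset_mjoin:
  "sum_mset (image_mset f (mjoin N enc T)) = (\<Sum>j<N. sum_mset (image_mset (\<lambda>q. f (enc j q)) (T j)))"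
  by (induction N) (simp_all add: mjoin_def multiset.map_comp comp_def)

lemma size_mjoin: "size (mjoin N enc T) = (\<Sum>j<N. size (T j))"
  by (induction N) (simp_all add: mjoin_def)

lemma count_mset_card: "count (mset xs) v = card {i. i < length xs \<and> xs ! i = v}"
proof -
  have "count (mset xs) v = size (filter_mset (\<lambda>y. y = v) (mset xs))"
    by (rule count_conv_size_mset)
  also have "\<dots> = length (filter (\<lambda>y. y = v) xs)"
    by (metis mset_filter size_mset)
  also have "\<dots> = card {i. i < length xs \<and> xs ! i = v}"
    by (rule length_filter_conv_card)
  finally show ?thesis .
qed

lemma adj_iff_count:
  fixes ys :: "nat list"
  assumes sw: "sorted_wrt (\<lambda>x y. y \<le> x) ys"
  shows "(\<forall>j. Suc j < length ys \<longrightarrow> ys ! j = ys ! Suc j \<longrightarrow> P (ys ! j)) \<longleftrightarrow>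
         (\<forall>v. 2 \<le> count (mset ys) v \<longrightarrow> P v)"
proof
  assume adj: "\<forall>j. Suc j < length ys \<longrightarrow> ys ! j = ys ! Suc j \<longrightarrow> P (ys ! j)"
  show "\<forall>v. 2 \<le> count (mset ys) v \<longrightarrow> P v"
  proof (intro allI impI)
    fix v assume "2 \<le> count (mset ys) v"
    then have c: "2 \<le> card {i. i < length ys \<and> ys ! i = v}" by (simp add: count_mset_card)
    obtain i k where ik: "i < k" "k < length ys" "ys ! i = v" "ys ! k = v"
    proof -
      have "\<exists>i k. i \<noteq> k \<and> i \<in> {i. i < length ys \<and> ys ! i = v} \<and> k \<in> {i. i < length ys \<and> ys ! i = v}"
      proof (rule ccontr)
        assume "\<not> ?thesis"
        then have "\<forall>i\<in>{i. i < length ys \<and> ys ! i = v}. \<forall>k\<in>{i. i < length ys \<and> ys ! i = v}. i = k" by blast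
        then have "card {i. i < length ys \<and> ys ! i = v} \<le> 1" by (simp add: card_le_Suc0_iff_eq)
        then show False using c by simp
      qed
      then obtain i k where "i \<noteq> k" "i < length ys" "ys ! i = v" "k < length ys" "ys ! k = v" by auto
      then show ?thesis using that[of i k] that[of k i] by (cases "i < k") auto
    qed
    have "Suc i < length ys" using ik by simp
    have "ys ! Suc i \<le> ys ! i" using sorted_wrt_nth_less[OF sw, of i "Suc i"] \<open>Suc i < length ys\<close> by simp
    moreover have "ys ! k \<le> ys ! Suc i"
    proof (cases "Suc i = k")
      case False
      then have "Suc i < k" using ik by simp
      then show ?thesis using sorted_wrt_nth_less[OF sw, of "Suc i" k] ik by simp
    qed simp
    ultimately have "ys ! i = ys ! Suc i" using ik by simp
    then show "P v" using adj \<open>Suc i < length ys\<close> ik by metis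
  qed
next
  assume cnt: "\<forall>v. 2 \<le> count (mset ys) v \<longrightarrow> P v"
  show "\<forall>j. Suc j < length ys \<longrightarrow> ys ! j = ys ! Suc j \<longrightarrow> P (ys ! j)"
  proof (intro allI impI)
    fix j assume j: "Suc j < length ys" "ys ! j = ys ! Suc j"
    have "{j, Suc j} \<subseteq> {i. i < length ys \<and> ys ! i = ys ! j}" using j by auto
    then have "card {j, Suc j} \<le> card {i. i < length ys \<and> ys ! i = ys ! j}"
      by (rule card_mono[rotated]) simp
    then have "2 \<le> count (mset ys) (ys ! j)" by (simp add: count_mset_card)
    then show "P (ys ! j)" using cnt by blast
  qed
qed

definition len :: "(nat \<Rightarrow> nat) \<Rightarrow> nat" where
  "len lam = card {j. lam j \<noteq> 0}"

lemma partition_len: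
  assumes "partition_seq lam"
  shows "lam j \<noteq> 0 \<longleftrightarrow> j < len lam"
proof -
  have dec: "\<And>n. lam (Suc n) \<le> lam n" and fin: "finite {j. lam j \<noteq> 0}"
    using assms by (auto simp: partition_seq_def)
  have ex: "\<exists>j. lam j = 0"
  proof (rule ccontr)
    assume "\<not> ?thesis" then have "{j. lam j \<noteq> 0} = UNIV" by auto
    then show False using fin by simp
  qed
  define L where "L = (LEAST j. lam j = 0)"
  have "{j. lam j \<noteq> 0} = {..<L}"
  proof (intro equalityI subsetI)
    fix j assume "j \<in> {j. lam j \<noteq> 0}"
    then have "\<not> L \<le> j"
      using lift_Suc_antimono_le[of lam L j, OF dec] LeastI_ex[OF ex] unfolding L_def by auto
    then show "j \<in> {..<L}" by simp
  next
    fix j assume "j \<in> {..<L}"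
    then show "j \<in> {j. lam j \<noteq> 0}" using not_less_Least unfolding L_def by auto
  qed
  then show ?thesis by (simp add: len_def set_eq_iff)
qed

definition toL :: "(nat \<Rightarrow> nat) \<Rightarrow> nat \<Rightarrow> nat list" where
  "toL f L = map f [0..<L]"

definition fromM :: "nat multiset \<Rightarrow> nat \<Rightarrow> nat" where
  "fromM M = (\<lambda>j. if j < size M then rev (sorted_list_of_multiset M) ! j else 0)"

lemma antimono_sw:
  assumes "\<And>n. f (Suc n) \<le> f n"
  shows "sorted_wrt (\<lambda>x y. y \<le> x) (toL f L)"
  unfolding sorted_wrt_iff_nth_less toL_def
  using lift_Suc_antimono_le[of f, OF assms] by auto

lemma sw_rev_sort:
  assumes "sorted_wrt (\<lambda>x y. y \<le> x) (ys :: nat list)"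
  shows "rev (sorted_list_of_multiset (mset ys)) = ys"
proof -
  have "sorted (rev ys)" using assms by (simp add: sorted_wrt_rev)
  then have "sort ys = rev ys" using properties_for_sort[of "rev ys" ys] by simp
  then show ?thesis by simp
qed

lemma fromM_toL:
  assumes "\<And>n. f (Suc n) \<le> f n" "\<And>j. L \<le> j \<Longrightarrow> f j = 0"
  shows "fromM (mset (toL f L)) = f"
proof
  fix j
  have r: "rev (sorted_list_of_multiset (mset (toL f L))) = toL f L"
    by (rule sw_rev_sort, rule antimono_sw, rule assms(1))
  show "fromM (mset (toL f L)) j = f j"
    unfolding fromM_def r using assms(2)[of j] by (auto simp: toL_def)
qed

definition revs :: "nat multiset \<Rightarrow> nat list" where
  "revs M = rev (sorted_list_of_multiset M)"

lemma revs_props: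
  "sorted_wrt (\<lambda>x y. y \<le> x) (revs M)" "length (revs M) = size M" "mset (revs M) = M"
  "set (revs M) = set_mset M"
proof -
  have "sorted (sorted_list_of_multiset M)" by simp
  then show "sorted_wrt (\<lambda>x y. y \<le> x) (revs M)" by (simp add: revs_def sorted_wrt_rev)
  show "length (revs M) = size M" by (metis length_rev mset_sorted_list_of_multiset revs_def size_mset)
  show "mset (revs M) = M" by (simp add: revs_def)
  show "set (revs M) = set_mset M" by (simp add: revs_def)
qed

lemma fromM_eq: "fromM M j = (if j < size M then revs M ! j else 0)"
  by (simp add: fromM_def revs_def)

lemma toL_fromM: "toL (fromM M) (size M) = revs M"
  by (rule nth_equalityI) (auto simp: toL_def fromM_eq revs_props)

lemma fromM_dec: "fromM M (Suc j) \<le> fromM M j"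
proof -
  have sw: "sorted_wrt (\<lambda>x y. y \<le> x) (revs M)" and l: "length (revs M) = size M" by (rule revs_props)+
  show ?thesis using sorted_wrt_nth_less[OF sw, of j "Suc j"] l by (auto simp: fromM_eq)
qed

lemma fromM_partition: "partition_seq (fromM M)"
proof -
  have "{j. fromM M j \<noteq> 0} \<subseteq> {..<size M}" by (auto simp: fromM_eq split: if_splits)
  then show ?thesis unfolding partition_seq_def using fromM_dec finite_subset by blast
qed

lemma fromM_nz:
  assumes "0 \<notin># M" shows "fromM M j \<noteq> 0 \<longleftrightarrow> j < size M"
proof -
  have "j < size M \<Longrightarrow> revs M ! j \<in># M"
    using revs_props(2,4)[of M] by (metis nth_mem)
  then show ?thesis using assms by (auto simp: fromM_eq) (metis gr0I)
qed

definition ABset :: "(int \<Rightarrow> int) \<Rightarrow> (nat multiset \<times> nat multiset) set" where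
  "ABset s = {(A,B). 0 \<notin># A \<and> size A = size B \<and> (\<forall>v. 2 \<le> count A v \<longrightarrow> s (int v) = -1)
     \<and> (\<forall>v. 2 \<le> count B v \<longrightarrow> s (- int v) = -1)}"

definition toAB :: "(nat \<Rightarrow> nat) \<times> (nat \<Rightarrow> nat) \<Rightarrow> nat multiset \<times> nat multiset" where
  "toAB p = (mset (toL (fst p) (len (fst p))), mset (toL (snd p) (len (fst p))))"

lemma Pset_facts:
  assumes "(lam, mu) \<in> Pset s 0 (-1)"
  shows "partition_seq lam" "partition_seq mu" "\<And>j. lam j \<noteq> 0 \<longleftrightarrow> j < len lam"
    "\<And>j. len lam \<le> j \<Longrightarrow> mu j = 0"
    "\<And>j. lam j = lam (Suc j) \<Longrightarrow> s (int (lam j)) = -1 \<or> (lam j = 0 \<and> mu j = 0)"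
    "\<And>j. mu j = mu (Suc j) \<Longrightarrow> s (- int (mu j)) = -1 \<or> (mu j = 0 \<and> lam (Suc j) = 0)"
proof -
  have h: "partition_seq lam" "partition_seq mu" "\<forall>j. lam j = 0 \<longrightarrow> mu j = 0"
    "\<forall>j. lam j = lam (Suc j) \<longrightarrow> s (0 + int (lam j)) = -1 \<or> (lam j = 0 \<and> mu j = 0)"
    "\<forall>j. mu j = mu (Suc j) \<longrightarrow> s (0 - int (mu j)) = -1 \<or> (mu j = 0 \<and> lam (Suc j) = 0)"
    using assms unfolding Pset_def by simp_all
  show "partition_seq lam" "partition_seq mu" by (fact h(1), fact h(2))
  show L: "\<And>j. lam j \<noteq> 0 \<longleftrightarrow> j < len lam" by (rule partition_len[OF h(1)])
  show "\<And>j. len lam \<le> j \<Longrightarrow> mu j = 0" using L h(3) by (meson not_le)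
  show "\<And>j. lam j = lam (Suc j) \<Longrightarrow> s (int (lam j)) = -1 \<or> (lam j = 0 \<and> mu j = 0)"
    using h(4) by (metis add_0)
  show "\<And>j. mu j = mu (Suc j) \<Longrightarrow> s (- int (mu j)) = -1 \<or> (mu j = 0 \<and> lam (Suc j) = 0)"
    using h(5) by (metis diff_0)
qed

lemma toAB_in:
  assumes P: "(lam, mu) \<in> Pset s 0 (-1)" and s0: "s 0 = -1"
  shows "toAB (lam, mu) \<in> ABset s"
proof -
  note F = Pset_facts[OF P]
  let ?L = "len lam"
  have swl: "sorted_wrt (\<lambda>x y. y \<le> x) (toL lam ?L)"
    by (rule antimono_sw) (use F(1) in \<open>simp add: partition_seq_def\<close>)
  have swm: "sorted_wrt (\<lambda>x y. y \<le> x) (toL mu ?L)"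
    by (rule antimono_sw) (use F(2) in \<open>simp add: partition_seq_def\<close>)
  have "0 \<notin># mset (toL lam ?L)"
  proof
    assume "0 \<in># mset (toL lam ?L)"
    then obtain j where "j < ?L" "lam j = 0" by (auto simp: toL_def)
    then show False using F(3)[of j] by simp
  qed
  moreover have "\<forall>v. 2 \<le> count (mset (toL lam ?L)) v \<longrightarrow> s (int v) = -1"
  proof -
    have "\<forall>j. Suc j < length (toL lam ?L) \<longrightarrow> toL lam ?L ! j = toL lam ?L ! Suc j \<longrightarrow> s (int (toL lam ?L ! j)) = -1"
    proof (intro allI impI)
      fix j assume j: "Suc j < length (toL lam ?L)" "toL lam ?L ! j = toL lam ?L ! Suc j"
      then have "lam j = lam (Suc j)" "j < ?L" by (auto simp: toL_def nth_append simp del: upt_Suc)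
      then show "s (int (toL lam ?L ! j)) = -1" using F(5)[of j] F(3)[of j] by (auto simp: toL_def)
    qed
    then show ?thesis by (rule adj_iff_count[OF swl, THEN iffD1])
  qed
  moreover have "\<forall>v. 2 \<le> count (mset (toL mu ?L)) v \<longrightarrow> s (- int v) = -1"
  proof -
    have "\<forall>j. Suc j < length (toL mu ?L) \<longrightarrow> toL mu ?L ! j = toL mu ?L ! Suc j \<longrightarrow> s (- int (toL mu ?L ! j)) = -1"
    proof (intro allI impI)
      fix j assume j: "Suc j < length (toL mu ?L)" "toL mu ?L ! j = toL mu ?L ! Suc j"
      then have "mu j = mu (Suc j)" "j < ?L" by (auto simp: toL_def nth_append simp del: upt_Suc)
      then show "s (- int (toL mu ?L ! j)) = -1" using F(6)[of j] s0 by (auto simp: toL_def)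
    qed
    then show ?thesis by (rule adj_iff_count[OF swm, THEN iffD1])
  qed
  ultimately show ?thesis by (simp add: ABset_def toAB_def toL_def)
qed

lemma fromAB_in:
  assumes AB: "(A, B) \<in> ABset s" and s0: "s 0 = -1"
  shows "(fromM A, fromM B) \<in> Pset s 0 (-1)" and "toAB (fromM A, fromM B) = (A, B)"
proof -
  have A0: "0 \<notin># A" and sz: "size A = size B"
    and cA: "\<forall>v. 2 \<le> count A v \<longrightarrow> s (int v) = -1" and cB: "\<forall>v. 2 \<le> count B v \<longrightarrow> s (- int v) = -1"
    using AB by (auto simp: ABset_def)
  let ?L = "size A"
  have nz: "\<And>j. fromM A j \<noteq> 0 \<longleftrightarrow> j < ?L" using fromM_nz[OF A0] .
  have lenL: "len (fromM A) = ?L"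
  proof -
    have "{j. fromM A j \<noteq> 0} = {..<?L}" using nz by auto
    then show ?thesis by (simp add: len_def)
  qed
  have mu0: "\<And>j. ?L \<le> j \<Longrightarrow> fromM B j = 0" using sz by (simp add: fromM_eq)
  have adjA: "\<forall>j. Suc j < length (revs A) \<longrightarrow> revs A ! j = revs A ! Suc j \<longrightarrow> s (int (revs A ! j)) = -1"
    using adj_iff_count[OF revs_props(1), of A "\<lambda>v. s (int v) = -1"] cA by (simp add: revs_props)
  have adjB: "\<forall>j. Suc j < length (revs B) \<longrightarrow> revs B ! j = revs B ! Suc j \<longrightarrow> s (- int (revs B ! j)) = -1"
    using adj_iff_count[OF revs_props(1), of B "\<lambda>v. s (- int v) = -1"] cB by (simp add: revs_props)
  have c1: "\<forall>j. fromM A j = 0 \<longrightarrow> fromM B j = 0" using nz mu0 by (meson not_le)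
  have c2: "\<forall>j. fromM A j = fromM A (Suc j) \<longrightarrow> s (0 + int (fromM A j)) = -1 \<or> (fromM A j = 0 \<and> fromM B j = 0)"
  proof (intro allI impI)
    fix j assume e: "fromM A j = fromM A (Suc j)"
    consider "Suc j < ?L" | "Suc j = ?L" | "?L \<le> j" by linarith
    then show "s (0 + int (fromM A j)) = -1 \<or> (fromM A j = 0 \<and> fromM B j = 0)"
    proof cases
      case 1
      then show ?thesis using adjA e by (simp add: fromM_eq revs_props)
    next
      case 2
      then show ?thesis using e nz[of j] nz[of "Suc j"] by simp
    next
      case 3
      then show ?thesis using nz[of j] mu0[of j] by simp
    qed
  qed
  have c3: "\<forall>j. fromM B j = fromM B (Suc j) \<longrightarrow> s (0 - int (fromM B j)) = -1 \<or> (fromM B j = 0 \<and> fromM A (Suc j) = 0)"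
  proof (intro allI impI)
    fix j assume e: "fromM B j = fromM B (Suc j)"
    show "s (0 - int (fromM B j)) = -1 \<or> (fromM B j = 0 \<and> fromM A (Suc j) = 0)"
    proof (cases "Suc j < ?L")
      case True
      then show ?thesis using adjB e sz by (simp add: fromM_eq revs_props)
    next
      case False
      then have "fromM B j = 0" using e mu0[of "Suc j"] by simp
      then show ?thesis using s0 by simp
    qed
  qed
  show "(fromM A, fromM B) \<in> Pset s 0 (-1)"
    unfolding Pset_def using fromM_partition c1 c2 c3 by simp
  show "toAB (fromM A, fromM B) = (A, B)"
    unfolding toAB_def using lenL toL_fromM[of A] toL_fromM[of B] sz by (simp add: revs_props)
qed

lemma fromAB_toAB:
  assumes P: "(lam, mu) \<in> Pset s 0 (-1)"
  shows "(fromM (fst (toAB (lam, mu))), fromM (snd (toAB (lam, mu)))) = (lam, mu)"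
proof -
  note F = Pset_facts[OF P]
  have d1: "\<And>n. lam (Suc n) \<le> lam n" and d2: "\<And>n. mu (Suc n) \<le> mu n"
    using F(1,2) by (auto simp: partition_seq_def)
  have "fromM (mset (toL lam (len lam))) = lam"
    by (rule fromM_toL, rule d1) (use F(3) not_le in metis)
  moreover have "fromM (mset (toL mu (len lam))) = mu"
    by (rule fromM_toL, rule d2) (use F(4) in metis)
  ultimately show ?thesis by (simp add: toAB_def)
qed

lemma bij_toAB:
  assumes s0: "s 0 = -1"
  shows "bij_betw toAB (Pset s 0 (-1)) (ABset s)"
proof (rule bij_betw_byWitness[where f' = "\<lambda>(A,B). (fromM A, fromM B)"])
  show "\<forall>a\<in>Pset s 0 (-1). (\<lambda>(A,B). (fromM A, fromM B)) (toAB a) = a"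
    using fromAB_toAB by (auto simp: case_prod_beta)
  show "\<forall>a'\<in>ABset s. toAB ((\<lambda>(A,B). (fromM A, fromM B)) a') = a'"
    using fromAB_in(2)[of _ _ s, rotated, OF s0] by auto
  show "toAB ` Pset s 0 (-1) \<subseteq> ABset s"
    using toAB_in[of _ _ s, rotated, OF s0] by auto
  show "(\<lambda>(A,B). (fromM A, fromM B)) ` ABset s \<subseteq> Pset s 0 (-1)"
    using fromAB_in(1)[of _ _ s, rotated, OF s0] by auto
qed

definition wA :: "nat \<Rightarrow> nat \<Rightarrow> nat \<Rightarrow> nat" where
  "wA N v c = card {t. t < v \<and> (0 + int t) mod int N = int c}"

definition wB :: "nat \<Rightarrow> nat \<Rightarrow> nat \<Rightarrow> nat" where
  "wB N v c = card {t. 1 \<le> t \<and> t \<le> v \<and> (0 - int t) mod int N = int c}"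

lemma wt_toAB:
  assumes P: "(lam, mu) \<in> Pset s 0 (-1)"
  shows "wt_exp N 0 lam mu c = sum_mset (image_mset (\<lambda>v. wA N v c) (fst (toAB (lam, mu))))
           + sum_mset (image_mset (\<lambda>v. wB N v c) (snd (toAB (lam, mu))))"
proof -
  note F = Pset_facts[OF P]
  let ?L = "len lam"
  have s1: "{j. lam j \<noteq> 0} = {..<?L}" using F(3) by auto
  have s2: "(\<Sum>j\<in>{j. mu j \<noteq> 0}. wB N (mu j) c) = (\<Sum>j<?L. wB N (mu j) c)"
  proof (rule sum.mono_neutral_left)
    show "{j. mu j \<noteq> 0} \<subseteq> {..<?L}"
    proof
      fix x assume "x \<in> {j. mu j \<noteq> 0}"
      then show "x \<in> {..<?L}" using F(4)[of x] by (meson lessThan_iff mem_Collect_eq not_le)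
    qed
    show "\<forall>i\<in>{..<?L} - {j. mu j \<noteq> 0}. wB N (mu i) c = 0" by (simp add: wB_def)
  qed simp
  have m: "\<And>f g. sum_mset (image_mset g (mset (toL f ?L))) = (\<Sum>j<?L. g (f j))"
    by (simp add: toL_def sum_unfold_sum_mset multiset.map_comp comp_def atLeast0LessThan)
  show ?thesis
    unfolding wt_exp_def toAB_def fst_conv snd_conv m s1 s2[unfolded wB_def]
    by (simp add: wA_def wB_def)
qed

lemma card_mod_class:
  fixes N c :: nat
  assumes "c < N"
  shows "card {t. P t \<and> t mod N = c} = card {i. P (N * i + c)}"
proof -
  have "{t. P t \<and> t mod N = c} = (\<lambda>i. N * i + c) ` {i. P (N * i + c)}"
  proof (intro equalityI subsetI)
    fix t assume t: "t \<in> {t. P t \<and> t mod N = c}"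
    have e: "t = N * (t div N) + c" using t div_mult_mod_eq[of t N] by (simp add: mult.commute)
    have "P (N * (t div N) + c)" using t e by simp
    then show "t \<in> (\<lambda>i. N * i + c) ` {i. P (N * i + c)}" using e by (intro image_eqI[where x="t div N"]) simp_all
  next
    fix t assume "t \<in> (\<lambda>i. N * i + c) ` {i. P (N * i + c)}"
    then show "t \<in> {t. P t \<and> t mod N = c}" using assms by auto
  qed
  moreover have "inj (\<lambda>i. N * i + c)" using assms by (intro injI) simp
  ultimately show ?thesis by (simp add: card_image inj_on_subset)
qed

lemma range_count:
  fixes N r e q :: nat
  assumes "r < N" "e \<le> N"
  shows "{i. N * i + r < N * q + e} = {..<q + (if r < e then 1 else 0)}"
proof (intro equalityI subsetI)
  fix i assume "i \<in> {i. N * i + r < N * q + e}"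
  then have h: "N * i + r < N * q + e" by simp
  show "i \<in> {..<q + (if r < e then 1 else 0)}"
  proof (rule ccontr)
    assume "i \<notin> {..<q + (if r < e then 1 else 0)}"
    then have "q + (if r < e then 1 else 0) \<le> i" by simp
    then have "N * (q + (if r < e then 1 else 0)) \<le> N * i" by simp
    then show False using h assms by (auto split: if_splits simp: algebra_simps)
  qed
next
  fix i assume "i \<in> {..<q + (if r < e then 1 else 0)}"
  then have "i < q \<or> (i = q \<and> r < e)" by (auto split: if_splits)
  then show "i \<in> {i. N * i + r < N * q + e}"
  proof
    assume "i < q"
    then have "N * (Suc i) \<le> N * q" by (intro mult_le_mono2) simp
    then show ?thesis using assms by simp
  qed simp
qed

lemma int_mod_nat: "(0 + int t) mod int N = int c \<longleftrightarrow> t mod N = c"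
  by (metis add_0 of_nat_eq_iff zmod_int)

lemma wA_class:
  assumes "j < N" "c < N"
  shows "wA N (N * q + j + 1) c = q + (if c \<le> j then 1 else 0)"
proof -
  have "wA N (N * q + j + 1) c = card {t. t < N * q + j + 1 \<and> t mod N = c}"
    by (simp add: wA_def int_mod_nat[simplified])
  also have "\<dots> = card {i. N * i + c < N * q + (j + 1)}"
    using card_mod_class[OF assms(2), of "\<lambda>t. t < N * q + j + 1"] by (simp add: add.assoc)
  also have "\<dots> = q + (if c \<le> j then 1 else 0)"
    using range_count[of c N "j+1" q] assms by simp
  finally show ?thesis .
qed

lemma neg_mod_iff:
  fixes N t c :: nat
  assumes "c < N"
  shows "(0 - int t) mod int N = int c \<longleftrightarrow> t mod N = (N - c) mod N"
proof -
  have N: "0 < N" using assms by simp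
  have "(- int t) mod int N = (if int t mod int N = 0 then 0 else int N - int t mod int N)"
    by (rule zmod_zminus1_eq_if)
  also have "\<dots> = int (if t mod N = 0 then 0 else N - t mod N)"
  proof -
    have z: "int t mod int N = int (t mod N)" by (simp add: zmod_int)
    have "t mod N \<le> N" using N by (simp add: less_imp_le)
    then show ?thesis unfolding z by (simp add: of_nat_diff)
  qed
  finally have e: "(- int t) mod int N = int (if t mod N = 0 then 0 else N - t mod N)" .
  have m: "t mod N < N" using N by simp
  have "(if t mod N = 0 then 0 else N - t mod N) = c \<longleftrightarrow> t mod N = (N - c) mod N"
  proof (cases "c = 0")
    case True
    then show ?thesis using m by auto
  next
    case False
    then have "(N - c) mod N = N - c" using assms by simp
    then show ?thesis using m False assms by auto
  qed
  then show ?thesis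
    unfolding diff_0 e of_nat_eq_iff .
qed

lemma wB_class:
  assumes "j < N" "c < N"
  shows "wB N (N * q + (N - j) mod N) c = q + (if j \<noteq> 0 \<and> j \<le> c then 1 else 0)"
proof -
  let ?c' = "(N - c) mod N" and ?r = "(N - j) mod N"
  have N: "0 < N" using assms by simp
  have c': "?c' < N" and r: "?r < N" using N by simp_all
  have "wB N (N * q + ?r) c = card {t. (1 \<le> t \<and> t < N * q + (?r + 1)) \<and> t mod N = ?c'}"
    unfolding wB_def using neg_mod_iff[OF assms(2)] by (intro arg_cong[where f=card]) auto
  also have "\<dots> = card {i. 1 \<le> N * i + ?c' \<and> N * i + ?c' < N * q + (?r + 1)}"
    by (rule card_mod_class[OF c'])
  also have "\<dots> = q + (if j \<noteq> 0 \<and> j \<le> c then 1 else 0)"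
  proof (cases "c = 0")
    case True
    then have "{i. 1 \<le> N * i + ?c' \<and> N * i + ?c' < N * q + (?r + 1)} = {1..<q + 1}"
      using range_count[of 0 N "?r + 1" q] N r by (auto simp: set_eq_iff)
    then show ?thesis using True by auto
  next
    case False
    then have cc: "?c' = N - c" using assms by simp
    have "1 \<le> ?c'" using cc assms by simp
    then have "{i. 1 \<le> N * i + ?c' \<and> N * i + ?c' < N * q + (?r + 1)} = {i. N * i + ?c' < N * q + (?r + 1)}"
      by auto
    also have "\<dots> = {..<q + (if ?c' < ?r + 1 then 1 else 0)}"
      by (rule range_count) (use c' r in auto)
    finally have e: "{i. 1 \<le> N * i + ?c' \<and> N * i + ?c' < N * q + (?r + 1)} = {..<q + (if ?c' < ?r + 1 then 1 else 0)}" .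
    have "(?c' < ?r + 1) = (j \<noteq> 0 \<and> j \<le> c)"
      using cc assms False by (cases "j = 0") auto
    then show ?thesis unfolding e by simp
  qed
  finally show ?thesis .
qed

lemma periodic_nat:
  assumes "\<forall>i. s (i + int N) = s i"
  shows "s (i + int N * int k) = s i"
proof (induction k)
  case (Suc k)
  have "s (i + int N * int (Suc k)) = s ((i + int N * int k) + int N)" by (simp add: algebra_simps)
  also have "\<dots> = s (i + int N * int k)" using assms by blast
  finally show ?case using Suc by simp
qed simp

lemma periodic_neg:
  assumes "\<forall>i. s (i + int N) = s i"
  shows "s (i - int N * int k) = s i"
  using periodic_nat[OF assms, of "i - int N * int k" k] by simp

lemma sA_class:
  assumes "\<forall>i. s (i + int N) = s i"
  shows "s (int (N * q + j + 1)) = s (int j + 1)"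
  using periodic_nat[OF assms, of "int j + 1" q] by (simp add: algebra_simps)

lemma sB_class:
  assumes "\<forall>i. s (i + int N) = s i" "j < N"
  shows "s (- int (N * q + (N - j) mod N)) = s (int j)"
proof (cases "j = 0")
  case True
  then show ?thesis using periodic_neg[OF assms(1), of 0 q] by simp
next
  case False
  then have "(N - j) mod N = N - j" using assms(2) by simp
  then have "- int (N * q + (N - j) mod N) = int j - int N * int (Suc q)"
    using assms(2) by (simp add: of_nat_diff algebra_simps)
  then show ?thesis using periodic_neg[OF assms(1), of "int j" "Suc q"] by simp
qed

definition encA :: "nat \<Rightarrow> nat \<Rightarrow> nat \<Rightarrow> nat" where "encA N j q = N * q + j + 1"
definition clsA :: "nat \<Rightarrow> nat \<Rightarrow> nat" where "clsA N v = (v - 1) mod N"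
definition decA :: "nat \<Rightarrow> nat \<Rightarrow> nat" where "decA N v = (v - 1) div N"
definition encB :: "nat \<Rightarrow> nat \<Rightarrow> nat \<Rightarrow> nat" where "encB N j q = N * q + (N - j) mod N"
definition clsB :: "nat \<Rightarrow> nat \<Rightarrow> nat" where "clsB N v = (N - v mod N) mod N"
definition decB :: "nat \<Rightarrow> nat \<Rightarrow> nat" where "decB N v = v div N"

lemma okA: assumes "0 < N" shows "decomp_ok N (encA N) (clsA N) (decA N) {v. 1 \<le> v}"
  unfolding decomp_ok_def
proof (intro conjI allI impI ballI)
  fix j q assume j: "j < N"
  show "encA N j q \<in> {v. 1 \<le> v}" by (simp add: encA_def)
  show "clsA N (encA N j q) = j" using j by (simp add: encA_def clsA_def)
  show "decA N (encA N j q) = q" using j by (simp add: encA_def decA_def)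
next
  fix v :: nat assume v: "v \<in> {v. 1 \<le> v}"
  show "clsA N v < N" using assms by (simp add: clsA_def)
  show "encA N (clsA N v) (decA N v) = v"
    using v div_mult_mod_eq[of "v - 1" N] by (simp add: encA_def clsA_def decA_def mult.commute)
qed

lemma okB: assumes "0 < N" shows "decomp_ok N (encB N) (clsB N) (decB N) UNIV"
  unfolding decomp_ok_def
proof (intro conjI allI impI ballI)
  fix j q assume j: "j < N"
  show "encB N j q \<in> UNIV" by simp
  show "clsB N (encB N j q) = j"
  proof (cases "j = 0")
    case True then show ?thesis by (simp add: encB_def clsB_def)
  next
    case False
    then have "(N - j) mod N = N - j" using j by simp
    have "(N * q + (N - j) mod N) mod N = N - j"
      using j False mod_mult_self4[of N q "(N - j) mod N"] by (simp del: mod_mult_self4)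
    then show ?thesis using j False by (simp add: encB_def clsB_def)
  qed
  show "decB N (encB N j q) = q" using j assms by (simp add: encB_def decB_def)
next
  fix v :: nat
  show "clsB N v < N" using assms by (simp add: clsB_def)
  have m: "v mod N < N" using assms by simp
  have "(N - clsB N v) mod N = v mod N"
  proof (cases "v mod N = 0")
    case True then show ?thesis by (simp add: clsB_def)
  next
    case False
    then have "(N - v mod N) mod N = N - v mod N" using m by simp
    then show ?thesis using m False by (simp add: clsB_def)
  qed
  then show "encB N (clsB N v) (decB N v) = v"
    using div_mult_mod_eq[of v N] by (simp add: encB_def decB_def mult.commute)
qed

definition splitA where "splitA N A = msplit N (clsA N) (decA N) A"
definition splitB where "splitB N B = msplit N (clsB N) (decB N) B"
definition joinA where "joinA N T = mjoin N (encA N) T"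
definition joinB where "joinB N T = mjoin N (encB N) T"

definition TT :: "nat \<Rightarrow> (int \<Rightarrow> int) \<Rightarrow> ((nat \<Rightarrow> nat multiset) \<times> (nat \<Rightarrow> nat multiset)) set" where
  "TT N s = {(TA, TB). TA \<in> PiE {..<N} (\<lambda>j. {X. s (int j + 1) = 1 \<longrightarrow> (\<forall>q. count X q \<le> 1)})
      \<and> TB \<in> PiE {..<N} (\<lambda>j. {X. s (int j) = 1 \<longrightarrow> (\<forall>q. count X q \<le> 1)})
      \<and> (\<Sum>j<N. size (TA j)) = (\<Sum>j<N. size (TB j))}"

definition WT :: "nat \<Rightarrow> (nat \<Rightarrow> nat multiset) \<Rightarrow> (nat \<Rightarrow> nat multiset) \<Rightarrow> nat \<Rightarrow> nat" where
  "WT N TA TB c = (\<Sum>j<N. sum_mset (TA j) + (if c \<le> j then size (TA j) else 0))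
     + (\<Sum>j<N. sum_mset (TB j) + (if j \<noteq> 0 \<and> j \<le> c then size (TB j) else 0))"

lemma sum_mset_plus_const: "sum_mset (image_mset (\<lambda>q. q + k) X) = sum_mset X + size X * (k::nat)"
  by (induction X) auto

lemma nz_set: "0 \<notin># A \<Longrightarrow> set_mset A \<subseteq> {v::nat. 1 \<le> v}"
proof
  fix x assume "0 \<notin># A" "x \<in># A"
  then show "x \<in> {v. 1 \<le> v}" by (cases x) auto
qed

lemma wA_class': "j < N \<Longrightarrow> c < N \<Longrightarrow> wA N (Suc (N * q + j)) c = q + (if c \<le> j then 1 else 0)"
  using wA_class[of j N c q] by simp

lemma weightA:
  assumes N: "0 < N" and A0: "0 \<notin># A" and c: "c < N"
  shows "sum_mset (image_mset (\<lambda>v. wA N v c) A) = (\<Sum>j<N. sum_mset (splitA N A j) + (if c \<le> j then size (splitA N A j) else 0))"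
proof -
  have sA: "set_mset A \<subseteq> {v. 1 \<le> v}" using A0 by (rule nz_set)
  have e: "mjoin N (encA N) (splitA N A) = A" unfolding splitA_def by (rule mjoin_msplit[OF okA[OF N] sA])
  have "sum_mset (image_mset (\<lambda>v. wA N v c) A) = (\<Sum>j<N. sum_mset (image_mset (\<lambda>q. wA N (encA N j q) c) (splitA N A j)))"
    using sum_mset_mjoin[of "\<lambda>v. wA N v c" N "encA N" "splitA N A"] by (simp only: e)
  also have "\<dots> = (\<Sum>j<N. sum_mset (image_mset (\<lambda>q. q + (if c \<le> j then 1 else 0)) (splitA N A j)))"
    by (intro sum.cong refl arg_cong[where f=sum_mset] image_mset_cong) (simp add: encA_def wA_class' c)
  also have "\<dots> = (\<Sum>j<N. sum_mset (splitA N A j) + (if c \<le> j then size (splitA N A j) else 0))"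
    by (simp only: sum_mset_plus_const) (auto intro!: sum.cong)
  finally show ?thesis .
qed

lemma weightB:
  assumes N: "0 < N" and c: "c < N"
  shows "sum_mset (image_mset (\<lambda>v. wB N v c) B) = (\<Sum>j<N. sum_mset (splitB N B j) + (if j \<noteq> 0 \<and> j \<le> c then size (splitB N B j) else 0))"
proof -
  have e: "mjoin N (encB N) (splitB N B) = B" unfolding splitB_def by (rule mjoin_msplit[OF okB[OF N]]) simp
  have "sum_mset (image_mset (\<lambda>v. wB N v c) B) = (\<Sum>j<N. sum_mset (image_mset (\<lambda>q. wB N (encB N j q) c) (splitB N B j)))"
    using sum_mset_mjoin[of "\<lambda>v. wB N v c" N "encB N" "splitB N B"] by (simp only: e)
  also have "\<dots> = (\<Sum>j<N. sum_mset (image_mset (\<lambda>q. q + (if j \<noteq> 0 \<and> j \<le> c then 1 else 0)) (splitB N B j)))"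
    by (intro sum.cong refl arg_cong[where f=sum_mset] image_mset_cong) (simp add: encB_def wB_class c)
  also have "\<dots> = (\<Sum>j<N. sum_mset (splitB N B j) + (if j \<noteq> 0 \<and> j \<le> c then size (splitB N B j) else 0))"
    by (simp only: sum_mset_plus_const) (auto intro!: sum.cong)
  finally show ?thesis .
qed

lemma condA:
  fixes s :: "int \<Rightarrow> int"
  assumes N: "0 < N" and A0: "0 \<notin># A" and per: "\<forall>i. s (i + int N) = s i" and pm: "\<forall>i. s i = 1 \<or> s i = -1"
  shows "(\<forall>v. 2 \<le> count A v \<longrightarrow> s (int v) = -1) \<longleftrightarrow> (\<forall>j<N. s (int j + 1) = 1 \<longrightarrow> (\<forall>q. count (splitA N A j) q \<le> 1))"
proof -
  have sA: "set_mset A \<subseteq> {v. 1 \<le> v}" using A0 by (rule nz_set)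
  note ok = okA[OF N]
  have cnt: "\<And>j q. j < N \<Longrightarrow> count (splitA N A j) q = count A (encA N j q)"
    unfolding splitA_def by (rule count_msplit[OF ok sA])
  have sv: "\<And>j q. s (int (encA N j q)) = s (int j + 1)"
    unfolding encA_def by (rule sA_class[OF per])
  show ?thesis
  proof
    assume h: "\<forall>v. 2 \<le> count A v \<longrightarrow> s (int v) = -1"
    show "\<forall>j<N. s (int j + 1) = 1 \<longrightarrow> (\<forall>q. count (splitA N A j) q \<le> 1)"
    proof (intro allI impI)
      fix j q assume j: "j < N" and sj: "s (int j + 1) = 1"
      show "count (splitA N A j) q \<le> 1"
      proof (rule ccontr)
        assume "\<not> count (splitA N A j) q \<le> 1"
        then have "2 \<le> count A (encA N j q)" using cnt[OF j] by simp
        then have "s (int (encA N j q)) = -1" using h by blast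
        then show False using sv sj by simp
      qed
    qed
  next
    assume h: "\<forall>j<N. s (int j + 1) = 1 \<longrightarrow> (\<forall>q. count (splitA N A j) q \<le> 1)"
    show "\<forall>v. 2 \<le> count A v \<longrightarrow> s (int v) = -1"
    proof (intro allI impI)
      fix v assume v: "2 \<le> count A v"
      then have "v \<in># A" by (metis count_eq_zero_iff not_numeral_le_zero)
      then have vD: "v \<in> {v. 1 \<le> v}" using sA by auto
      let ?j = "clsA N v" and ?q = "decA N v"
      have j: "?j < N" and e: "encA N ?j ?q = v" using ok vD by (auto simp: decomp_ok_def)
      have "2 \<le> count (splitA N A ?j) ?q" using cnt[OF j] e v by simp
      then have "s (int ?j + 1) \<noteq> 1" using h j by (meson not_le numeral_le_one_iff semiring_norm(69) le_trans)
      then have "s (int ?j + 1) = -1" using pm by blast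
      then show "s (int v) = -1" using sv[of ?j ?q] e by simp
    qed
  qed
qed

lemma condB:
  fixes s :: "int \<Rightarrow> int"
  assumes N: "0 < N" and per: "\<forall>i. s (i + int N) = s i" and pm: "\<forall>i. s i = 1 \<or> s i = -1"
  shows "(\<forall>v. 2 \<le> count B v \<longrightarrow> s (- int v) = -1) \<longleftrightarrow> (\<forall>j<N. s (int j) = 1 \<longrightarrow> (\<forall>q. count (splitB N B j) q \<le> 1))"
proof -
  note ok = okB[OF N]
  have cnt: "\<And>j q. j < N \<Longrightarrow> count (splitB N B j) q = count B (encB N j q)"
    unfolding splitB_def by (rule count_msplit[OF ok]) simp_all
  have sv: "\<And>j q. j < N \<Longrightarrow> s (- int (encB N j q)) = s (int j)"
    unfolding encB_def by (rule sB_class[OF per])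
  show ?thesis
  proof
    assume h: "\<forall>v. 2 \<le> count B v \<longrightarrow> s (- int v) = -1"
    show "\<forall>j<N. s (int j) = 1 \<longrightarrow> (\<forall>q. count (splitB N B j) q \<le> 1)"
    proof (intro allI impI)
      fix j q assume j: "j < N" and sj: "s (int j) = 1"
      show "count (splitB N B j) q \<le> 1"
      proof (rule ccontr)
        assume "\<not> count (splitB N B j) q \<le> 1"
        then have "2 \<le> count B (encB N j q)" using cnt[OF j] by simp
        then have "s (- int (encB N j q)) = -1" using h by blast
        then show False using sv[OF j] sj by simp
      qed
    qed
  next
    assume h: "\<forall>j<N. s (int j) = 1 \<longrightarrow> (\<forall>q. count (splitB N B j) q \<le> 1)"
    show "\<forall>v. 2 \<le> count B v \<longrightarrow> s (- int v) = -1"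
    proof (intro allI impI)
      fix v assume v: "2 \<le> count B v"
      let ?j = "clsB N v" and ?q = "decB N v"
      have j: "?j < N" and e: "encB N ?j ?q = v" using ok by (auto simp: decomp_ok_def)
      have "2 \<le> count (splitB N B ?j) ?q" using cnt[OF j] e v by simp
      then have "s (int ?j) \<noteq> 1"
      proof -
        assume a: "2 \<le> count (splitB N B ?j) ?q"
        show ?thesis
        proof
          assume "s (int ?j) = 1"
          then have "count (splitB N B ?j) ?q \<le> 1" using h j by blast
          then show False using a by simp
        qed
      qed
      then have "s (int ?j) = -1" using pm by blast
      then show "s (- int v) = -1" using sv[OF j, of ?q] e by simp
    qed
  qed
qed

lemma card_bij_restrict:
  assumes "bij_betw f S T" "\<forall>x\<in>S. P x = Q (f x)"
  shows "card {x\<in>S. P x} = card {y\<in>T. Q y}"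
proof -
  have "f ` {x\<in>S. P x} = {y\<in>T. Q y}"
    using assms by (auto simp: bij_betw_def)
  moreover have "inj_on f {x\<in>S. P x}" using assms by (auto simp: bij_betw_def intro: inj_on_subset)
  ultimately show ?thesis by (metis card_image)
qed

lemma bij_T:
  fixes s :: "int \<Rightarrow> int"
  assumes N: "0 < N" and per: "\<forall>i. s (i + int N) = s i" and pm: "\<forall>i. s i = 1 \<or> s i = -1"
  shows "bij_betw (\<lambda>(A,B). (splitA N A, splitB N B)) (ABset s) (TT N s)"
proof (rule bij_betw_byWitness[where f' = "\<lambda>(TA,TB). (joinA N TA, joinB N TB)"])
  note okA' = okA[OF N] and okB' = okB[OF N]
  show "\<forall>a\<in>ABset s. (\<lambda>(TA,TB). (joinA N TA, joinB N TB)) ((\<lambda>(A,B). (splitA N A, splitB N B)) a) = a"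
  proof
    fix a assume "a \<in> ABset s"
    then obtain A B where a: "a = (A,B)" "0 \<notin># A" by (auto simp: ABset_def)
    show "(\<lambda>(TA,TB). (joinA N TA, joinB N TB)) ((\<lambda>(A,B). (splitA N A, splitB N B)) a) = a"
      using a mjoin_msplit[OF okA' nz_set[OF a(2)]] mjoin_msplit[OF okB', of B]
      by (simp add: joinA_def joinB_def splitA_def splitB_def)
  qed
  show "\<forall>t\<in>TT N s. (\<lambda>(A,B). (splitA N A, splitB N B)) ((\<lambda>(TA,TB). (joinA N TA, joinB N TB)) t) = t"
  proof
    fix t assume "t \<in> TT N s"
    then obtain TA TB where t: "t = (TA,TB)" "TA \<in> extensional {..<N}" "TB \<in> extensional {..<N}"
      by (auto simp: TT_def PiE_def)
    show "(\<lambda>(A,B). (splitA N A, splitB N B)) ((\<lambda>(TA,TB). (joinA N TA, joinB N TB)) t) = t"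
      using t msplit_mjoin[OF okA' t(2)] msplit_mjoin[OF okB' t(3)]
      by (simp add: joinA_def joinB_def splitA_def splitB_def)
  qed
  show "(\<lambda>(A,B). (splitA N A, splitB N B)) ` ABset s \<subseteq> TT N s"
  proof
    fix y assume "y \<in> (\<lambda>(A,B). (splitA N A, splitB N B)) ` ABset s"
    then obtain A B where y: "y = (splitA N A, splitB N B)" and AB: "(A,B) \<in> ABset s" by auto
    have A0: "0 \<notin># A" and sz: "size A = size B"
      and cA: "\<forall>v. 2 \<le> count A v \<longrightarrow> s (int v) = -1" and cB: "\<forall>v. 2 \<le> count B v \<longrightarrow> s (- int v) = -1"
      using AB by (auto simp: ABset_def)
    have cA': "\<forall>j<N. s (int j + 1) = 1 \<longrightarrow> (\<forall>q. count (splitA N A j) q \<le> 1)"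
      using condA[OF N A0 per pm] cA by blast
    have cB': "\<forall>j<N. s (int j) = 1 \<longrightarrow> (\<forall>q. count (splitB N B j) q \<le> 1)"
      using condB[OF N per pm] cB by blast
    have "size A = (\<Sum>j<N. size (splitA N A j))"
      using size_mjoin[of N "encA N" "splitA N A"] mjoin_msplit[OF okA' nz_set[OF A0]] by (simp add: splitA_def)
    moreover have "size B = (\<Sum>j<N. size (splitB N B j))"
      using size_mjoin[of N "encB N" "splitB N B"] mjoin_msplit[OF okB', of B] by (simp add: splitB_def)
    ultimately have "(\<Sum>j<N. size (splitA N A j)) = (\<Sum>j<N. size (splitB N B j))" using sz by simp
    moreover have "splitA N A \<in> extensional {..<N}" "splitB N B \<in> extensional {..<N}"
      by (simp_all add: splitA_def splitB_def msplit_ext)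
    ultimately show "y \<in> TT N s" using y cA' cB' by (auto simp: TT_def PiE_def)
  qed
  show "(\<lambda>(TA,TB). (joinA N TA, joinB N TB)) ` TT N s \<subseteq> ABset s"
  proof
    fix y assume "y \<in> (\<lambda>(TA,TB). (joinA N TA, joinB N TB)) ` TT N s"
    then obtain TA TB where y: "y = (joinA N TA, joinB N TB)" and T: "(TA,TB) \<in> TT N s" by auto
    have eA: "TA \<in> extensional {..<N}" and eB: "TB \<in> extensional {..<N}"
      and cA: "\<forall>j<N. s (int j + 1) = 1 \<longrightarrow> (\<forall>q. count (TA j) q \<le> 1)"
      and cB: "\<forall>j<N. s (int j) = 1 \<longrightarrow> (\<forall>q. count (TB j) q \<le> 1)"
      and sz: "(\<Sum>j<N. size (TA j)) = (\<Sum>j<N. size (TB j))"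
      using T by (auto simp: TT_def PiE_def)
    let ?A = "joinA N TA" and ?B = "joinB N TB"
    have sA: "splitA N ?A = TA" using msplit_mjoin[OF okA' eA] by (simp add: splitA_def joinA_def)
    have sB: "splitB N ?B = TB" using msplit_mjoin[OF okB' eB] by (simp add: splitB_def joinB_def)
    have A0: "0 \<notin># ?A" using set_mjoin[OF okA', of TA] by (auto simp: joinA_def)
    have "\<forall>v. 2 \<le> count ?A v \<longrightarrow> s (int v) = -1" using condA[OF N A0 per pm] cA sA by simp
    moreover have "\<forall>v. 2 \<le> count ?B v \<longrightarrow> s (- int v) = -1" using condB[OF N per pm, of ?B] cB sB by simp
    moreover have "size ?A = size ?B" using sz by (simp add: joinA_def joinB_def size_mjoin)
    ultimately show "y \<in> ABset s" using y A0 by (simp add: ABset_def)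
  qed
qed

lemma count_reduce:
  fixes s :: "int \<Rightarrow> int"
  assumes N: "0 < N" and per: "\<forall>i. s (i + int N) = s i" and pm: "\<forall>i. s i = 1 \<or> s i = -1"
    and s0: "s 0 = -1"
  shows "card {(lam, mu) \<in> Pset s 0 (-1). \<forall>c<N. wt_exp N 0 lam mu c = d c}
       = card {(TA, TB) \<in> TT N s. \<forall>c<N. WT N TA TB c = d c}"
proof -
  have "card {(lam, mu) \<in> Pset s 0 (-1). \<forall>c<N. wt_exp N 0 lam mu c = d c}
      = card {x \<in> Pset s 0 (-1). \<forall>c<N. wt_exp N 0 (fst x) (snd x) c = d c}"
    by (rule arg_cong[where f=card]) auto
  also have "\<dots> = card {y \<in> ABset s. \<forall>c<N. sum_mset (image_mset (\<lambda>v. wA N v c) (fst y))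
           + sum_mset (image_mset (\<lambda>v. wB N v c) (snd y)) = d c}"
    by (rule card_bij_restrict[OF bij_toAB[of s, OF s0]]) (auto simp: wt_toAB)
  also have "\<dots> = card {t \<in> TT N s. \<forall>c<N. WT N (fst t) (snd t) c = d c}"
  proof (rule card_bij_restrict[OF bij_T[OF N per pm]], intro ballI)
    fix y assume "y \<in> ABset s"
    then obtain A B where y: "y = (A,B)" "0 \<notin># A" by (auto simp: ABset_def)
    show "(\<forall>c<N. sum_mset (image_mset (\<lambda>v. wA N v c) (fst y)) + sum_mset (image_mset (\<lambda>v. wB N v c) (snd y)) = d c)
        = (\<forall>c<N. WT N (fst ((\<lambda>(A,B). (splitA N A, splitB N B)) y)) (snd ((\<lambda>(A,B). (splitA N A, splitB N B)) y)) c = d c)"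
      using y weightA[OF N y(2)] weightB[OF N] by (simp add: WT_def)
  qed
  also have "\<dots> = card {(TA, TB) \<in> TT N s. \<forall>c<N. WT N TA TB c = d c}"
    by (rule arg_cong[where f=card]) auto
  finally show ?thesis .
qed

definition Ep :: "nat \<Rightarrow> (nat \<Rightarrow> nat) \<Rightarrow> (nat \<Rightarrow> nat) \<Rightarrow> nat \<Rightarrow> nat" where
  "Ep N a b c = (\<Sum>j<N. if c \<le> j then a j else 0) + (\<Sum>j<N. if j \<noteq> 0 \<and> j \<le> c then b j else 0)"

lemma Eexp_Ep:
  assumes N: "0 < N"
  shows "Eexp N a b t = int (Ep N a b t)"
proof -
  have e1: "(\<Sum>j\<in>{j. j < N \<and> t \<le> j}. int (a j)) = (\<Sum>j<N. if t \<le> j then int (a j) else 0)"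
  proof -
    have "{j. j < N \<and> t \<le> j} = {j \<in> {..<N}. t \<le> j}" by auto
    then show ?thesis unfolding lessThan_def by (simp only:) (rule sum.inter_filter, simp)
  qed
  have e2: "(\<Sum>j\<in>{j. j < N \<and> j \<le> t}. int (b j)) = (\<Sum>j<N. if j \<le> t then int (b j) else 0)"
  proof -
    have "{j. j < N \<and> j \<le> t} = {j \<in> {..<N}. j \<le> t}" by auto
    then show ?thesis unfolding lessThan_def by (simp only:) (rule sum.inter_filter, simp)
  qed
  have e3: "(\<Sum>j<N. if j \<le> t then int (b j) else 0)
      = (\<Sum>j<N. if j = 0 then int (b j) else 0) + (\<Sum>j<N. if j \<noteq> 0 \<and> j \<le> t then int (b j) else 0)"
    by (subst sum.distrib[symmetric]) (rule sum.cong, auto)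
  have e4: "(\<Sum>j<N. if j = 0 then int (b j) else 0) = int (b 0)" using N by simp
  have e5: "\<And>P f. int (\<Sum>j<N. if P j then f j else 0) = (\<Sum>j<N. if P j then int (f j) else 0)"
    by (auto simp: of_nat_sum intro!: sum.cong)
  show ?thesis
    unfolding Eexp_def Ep_def e1 e2 e3 e4 of_nat_add e5 by simp
qed

lemma qterm:
  fixes k :: nat and s :: int
  assumes "s = 1 \<or> s = -1"
  shows "int k * (int k - 1) * (1 + s) div 4 = int (if s = 1 then k * (k - 1) div 2 else 0)"
proof (cases "s = 1")
  case True
  have m: "int k * (int k - 1) = int (k * (k - 1))" by (cases k) (auto simp: algebra_simps)
  have "int k * (int k - 1) * (1 + s) div 4 = (int k * (int k - 1) * 2) div (2 * 2)"
    using True by simp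
  also have "\<dots> = (int k * (int k - 1)) div 2"
    by (subst zdiv_zmult2_eq) simp_all
  also have "\<dots> = int (k * (k - 1)) div 2" by (simp only: m)
  also have "\<dots> = int (k * (k - 1) div 2)" by (simp add: zdiv_int)
  finally show ?thesis using True by simp
next
  case False
  then have "s = -1" using assms by simp
  then show ?thesis by simp
qed

definition Qn :: "nat \<Rightarrow> (int \<Rightarrow> int) \<Rightarrow> (nat \<Rightarrow> nat) \<Rightarrow> (nat \<Rightarrow> nat) \<Rightarrow> nat" where
  "Qn N s a b = (\<Sum>j<N. (if s (int j + 1) = 1 then a j * (a j - 1) div 2 else 0)
                     + (if s (int j) = 1 then b j * (b j - 1) div 2 else 0))"

lemma Qexp_Qn:
  assumes pm: "\<forall>i. s i = 1 \<or> s i = -1"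
  shows "Qexp N s a b = int (Qn N s a b)"
  unfolding Qexp_def Qn_def of_nat_sum of_nat_add
  by (intro sum.cong refl) (simp only: qterm[OF pm[rule_format]])

lemma fps_prod_nth0: "fps_nth (\<Prod>i\<in>A. f i) 0 = (\<Prod>i\<in>A. fps_nth (f i) (0::nat))"
  by (induction A rule: infinite_finite_induct) auto

lemma qpoch_nth0: "fps_nth (qpoch k) 0 = 1"
  by (simp add: qpoch_def fps_prod_nth0)

lemma prodG:
  shows "(\<Prod>j<N. G (a j) (s (int j + 1) = 1)) * (\<Prod>j<N. G (b j) (s (int j) = 1))
       = fps_X ^ Qn N s a b * Fser N a b"
proof -
  let ?P = "\<Prod>j<N. qpoch (a j) * qpoch (b j)"
  have P0: "fps_nth ?P 0 = 1" by (simp add: fps_prod_nth0 qpoch_nth0)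
  have "(\<Prod>j<N. G (a j) (s (int j + 1) = 1)) * (\<Prod>j<N. G (b j) (s (int j) = 1)) * ?P
      = (\<Prod>j<N. (G (a j) (s (int j + 1) = 1) * qpoch (a j)) * (G (b j) (s (int j) = 1) * qpoch (b j)))"
    by (simp add: prod.distrib[symmetric] ac_simps)
  also have "\<dots> = (\<Prod>j<N. fps_X ^ ((if s (int j + 1) = 1 then a j * (a j - 1) div 2 else 0)
                     + (if s (int j) = 1 then b j * (b j - 1) div 2 else 0)))"
    by (intro prod.cong refl) (simp add: G_qpoch power_add)
  also have "\<dots> = fps_X ^ Qn N s a b" by (simp add: Qn_def power_sum)
  finally have h: "(\<Prod>j<N. G (a j) (s (int j + 1) = 1)) * (\<Prod>j<N. G (b j) (s (int j) = 1)) * ?P = fps_X ^ Qn N s a b" .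
  have "(\<Prod>j<N. G (a j) (s (int j + 1) = 1)) * (\<Prod>j<N. G (b j) (s (int j) = 1))
       = (\<Prod>j<N. G (a j) (s (int j + 1) = 1)) * (\<Prod>j<N. G (b j) (s (int j) = 1)) * (?P * inverse ?P)"
    using inverse_mult_eq_1'[of ?P] P0 by simp
  also have "\<dots> = fps_X ^ Qn N s a b * inverse ?P" by (simp only: mult.assoc[symmetric] h)
  finally show ?thesis by (simp add: Fser_def)
qed

definition Stot :: "nat \<Rightarrow> (nat \<Rightarrow> nat multiset) \<Rightarrow> (nat \<Rightarrow> nat multiset) \<Rightarrow> nat" where
  "Stot N TA TB = (\<Sum>j<N. sum_mset (TA j)) + (\<Sum>j<N. sum_mset (TB j))"

definition szf :: "nat \<Rightarrow> (nat \<Rightarrow> nat multiset) \<Rightarrow> nat \<Rightarrow> nat" where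
  "szf N T = (\<lambda>j. if j < N then size (T j) else 0)"

lemma WT_split: "WT N TA TB c = Stot N TA TB + Ep N (szf N TA) (szf N TB) c"
proof -
  have "WT N TA TB c = ((\<Sum>j<N. sum_mset (TA j)) + (\<Sum>j<N. if c \<le> j then size (TA j) else 0))
      + ((\<Sum>j<N. sum_mset (TB j)) + (\<Sum>j<N. if j \<noteq> 0 \<and> j \<le> c then size (TB j) else 0))"
    unfolding WT_def by (simp add: sum.distrib)
  moreover have "(\<Sum>j<N. if c \<le> j then size (TA j) else 0) = (\<Sum>j<N. if c \<le> j then szf N TA j else 0)"
    by (intro sum.cong) (auto simp: szf_def)
  moreover have "(\<Sum>j<N. if j \<noteq> 0 \<and> j \<le> c then size (TB j) else 0) = (\<Sum>j<N. if j \<noteq> 0 \<and> j \<le> c then szf N TB j else 0)"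
    by (intro sum.cong) (auto simp: szf_def)
  ultimately show ?thesis by (simp add: Stot_def Ep_def)
qed

definition FS :: "nat \<Rightarrow> nat \<Rightarrow> (nat \<Rightarrow> nat) set" where
  "FS N D = {f. \<forall>x. (x \<in> {..<N} \<longrightarrow> f x \<in> {..D}) \<and> (x \<notin> {..<N} \<longrightarrow> f x = 0)}"

lemma FS_finite: "finite (FS N D)"
  unfolding FS_def by (rule finite_set_of_finite_funs) simp_all

definition SS :: "nat \<Rightarrow> (int \<Rightarrow> int) \<Rightarrow> (nat \<Rightarrow> nat) \<Rightarrow> ((nat \<Rightarrow> nat multiset) \<times> (nat \<Rightarrow> nat multiset)) set" where
  "SS N s d = {(TA, TB) \<in> TT N s. \<forall>c<N. WT N TA TB c = d c}"

lemma SS_bounds: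
  assumes N: "0 < N" and x: "(TA, TB) \<in> SS N s d" and j: "j < N"
  shows "sum_mset (TA j) \<le> d 0" "size (TA j) \<le> d 0" "sum_mset (TB j) \<le> d 0" "size (TB j) \<le> d 0"
proof -
  have W: "WT N TA TB 0 = d 0" and sz: "(\<Sum>j<N. size (TA j)) = (\<Sum>j<N. size (TB j))"
    using x N by (auto simp: SS_def TT_def)
  have W0: "WT N TA TB 0 = (\<Sum>j<N. sum_mset (TA j) + size (TA j)) + (\<Sum>j<N. sum_mset (TB j))"
    unfolding WT_def by (auto intro!: sum.cong)
  have a1: "sum_mset (TA j) + size (TA j) \<le> (\<Sum>j<N. sum_mset (TA j) + size (TA j))"
    by (rule member_le_sum) (use j in auto)
  have a2: "sum_mset (TB j) \<le> (\<Sum>j<N. sum_mset (TB j))"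
    by (rule member_le_sum) (use j in auto)
  have a3: "size (TB j) \<le> (\<Sum>j<N. size (TB j))"
    by (rule member_le_sum) (use j in auto)
  have a4: "(\<Sum>j<N. size (TA j)) \<le> (\<Sum>j<N. sum_mset (TA j) + size (TA j))"
    by (rule sum_mono) simp
  show "sum_mset (TA j) \<le> d 0" "size (TA j) \<le> d 0" "sum_mset (TB j) \<le> d 0" "size (TB j) \<le> d 0"
    using W W0 a1 a2 a3 a4 sz by linarith+
qed

lemma SS_finite:
  assumes N: "0 < N"
  shows "finite (SS N s d)"
proof -
  let ?K = "\<Union>k\<in>{..d 0}. multisets_of_size {..d 0} k"
  have K: "finite ?K" by auto
  have "SS N s d \<subseteq> PiE {..<N} (\<lambda>_. ?K) \<times> PiE {..<N} (\<lambda>_. ?K)"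
  proof
    fix x assume x: "x \<in> SS N s d"
    then obtain TA TB where xe: "x = (TA, TB)" by (cases x)
    have ext: "TA \<in> extensional {..<N}" "TB \<in> extensional {..<N}"
      using x xe by (auto simp: SS_def TT_def PiE_def)
    have "\<And>j. j < N \<Longrightarrow> TA j \<in> ?K \<and> TB j \<in> ?K"
    proof -
      fix j assume j: "j < N"
      note b = SS_bounds[OF N x[unfolded xe] j]
      have "set_mset (TA j) \<subseteq> {..d 0}" using b(1) by (auto dest: mem_le_sum_mset)
      moreover have "set_mset (TB j) \<subseteq> {..d 0}" using b(3) by (auto dest: mem_le_sum_mset)
      ultimately show "TA j \<in> ?K \<and> TB j \<in> ?K" using b(2,4) by (auto simp: multisets_of_size_def)
    qed
    then show "x \<in> PiE {..<N} (\<lambda>_. ?K) \<times> PiE {..<N} (\<lambda>_. ?K)"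
      using ext xe by (auto simp: PiE_def Pi_def)
  qed
  moreover have "finite (PiE {..<N} (\<lambda>_. ?K) \<times> PiE {..<N} (\<lambda>_. ?K))"
    using K by (simp add: finite_PiE)
  ultimately show ?thesis by (rule finite_subset)
qed

definition CA :: "(int \<Rightarrow> int) \<Rightarrow> (nat \<Rightarrow> nat) \<Rightarrow> nat \<Rightarrow> nat multiset set" where
  "CA s a j = Mset (a j) (s (int j + 1) = 1)"
definition CB :: "(int \<Rightarrow> int) \<Rightarrow> (nat \<Rightarrow> nat) \<Rightarrow> nat \<Rightarrow> nat multiset set" where
  "CB s b j = Mset (b j) (s (int j) = 1)"

lemma CA_eq: "CA s a = (\<lambda>j. Mset (a j) (s (int j + 1) = 1))" by (rule ext) (simp add: CA_def)
lemma CB_eq: "CB s b = (\<lambda>j. Mset (b j) (s (int j) = 1))" by (rule ext) (simp add: CB_def)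

lemma gf_PiE:
  fixes N :: nat
  shows "gf (PiE {..<N} (\<lambda>j. Mset (a j) (P j))) (\<lambda>T. \<Sum>j<N. sum_mset (T j)) = (\<Prod>j<N. G (a j) (P j))"
proof (rule fps_ext)
  fix R
  have "real (card {T \<in> PiE {..<N} (\<lambda>j. Mset (a j) (P j)). (\<Sum>j<N. sum_mset (T j)) = R})
      = fps_nth (\<Prod>j<N. gf (Mset (a j) (P j)) sum_mset) R"
    by (rule PiE_count) (simp_all add: Mset_fiber_finite)
  then show "fps_nth (gf (PiE {..<N} (\<lambda>j. Mset (a j) (P j))) (\<lambda>T. \<Sum>j<N. sum_mset (T j))) R = fps_nth (\<Prod>j<N. G (a j) (P j)) R"
    by (simp add: gf_def G_def)
qed

lemma PiE_Mset_fiber_finite: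
  fixes N :: nat
  shows "finite {T \<in> PiE {..<N} (\<lambda>j. Mset (a j) (P j)). (\<Sum>j<N. sum_mset (T j)) = R}"
  by (rule PiE_fiber_finite) (simp_all add: Mset_fiber_finite)

lemma card_core:
  "real (card {(TA, TB) \<in> PiE {..<N} (CA s a) \<times> PiE {..<N} (CB s b).
          (\<Sum>j<N. sum_mset (TA j)) + (\<Sum>j<N. sum_mset (TB j)) = R})
   = (if R < Qn N s a b then 0 else fps_nth (Fser N a b) (R - Qn N s a b))"
proof -
  have "real (card {(TA, TB) \<in> PiE {..<N} (CA s a) \<times> PiE {..<N} (CB s b).
          (\<Sum>j<N. sum_mset (TA j)) + (\<Sum>j<N. sum_mset (TB j)) = R})
     = fps_nth (gf (PiE {..<N} (CA s a)) (\<lambda>T. \<Sum>j<N. sum_mset (T j)) * gf (PiE {..<N} (CB s b)) (\<lambda>T. \<Sum>j<N. sum_mset (T j))) R"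
    by (rule pair_count) (simp_all add: CA_eq CB_eq PiE_Mset_fiber_finite)
  also have "\<dots> = fps_nth ((\<Prod>j<N. G (a j) (s (int j + 1) = 1)) * (\<Prod>j<N. G (b j) (s (int j) = 1))) R"
    unfolding CA_eq CB_eq gf_PiE ..
  also have "\<dots> = fps_nth (fps_X ^ Qn N s a b * Fser N a b) R" by (simp only: prodG)
  also have "\<dots> = (if R < Qn N s a b then 0 else fps_nth (Fser N a b) (R - Qn N s a b))"
    by (rule fps_X_power_mult_nth)
  finally show ?thesis .
qed

lemma rhs_mem:
  fixes s :: "int \<Rightarrow> int"
  assumes N: "0 < N" and pm: "\<forall>i. s i = 1 \<or> s i = -1" and a: "a \<in> FS N D" and b: "b \<in> FS N D"
  shows "(a, b, r) \<in> rhs_index N s d \<longleftrightarrow> (\<Sum>j<N. a j) = (\<Sum>j<N. b j) \<and> (\<forall>t<N. d t = Ep N a b t + Qn N s a b + r)"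
proof -
  have aS: "\<forall>t\<ge>N. a t = 0" and bS: "\<forall>t\<ge>N. b t = 0" using a b by (auto simp: FS_def)
  have "\<And>t. (int (d t) = Eexp N a b t + Qexp N s a b + int r) \<longleftrightarrow> d t = Ep N a b t + Qn N s a b + r"
    unfolding Eexp_Ep[OF N] Qexp_Qn[OF pm] by linarith
  then show ?thesis using aS bS by (simp add: rhs_index_def)
qed

lemma fiber_count:
  fixes s :: "int \<Rightarrow> int" and d :: "nat \<Rightarrow> nat"
  assumes N: "0 < N" and pm: "\<forall>i. s i = 1 \<or> s i = -1" and a: "a \<in> FS N (d 0)" and b: "b \<in> FS N (d 0)"
  shows "real (card {x \<in> SS N s d. (szf N (fst x), szf N (snd x)) = (a, b)})
       = (\<Sum>r\<in>{..d 0}. if (a, b, r) \<in> rhs_index N s d then fps_nth (Fser N a b) r else 0)"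
proof -
  define Q where "Q = Qn N s a b"
  define R0 where "R0 = d 0 - Ep N a b 0"
  define cons where "cons = (Ep N a b 0 \<le> d 0 \<and> (\<forall>c<N. d c = R0 + Ep N a b c))"
  define sab where "sab = ((\<Sum>j<N. a j) = (\<Sum>j<N. b j))"
  have aS: "\<forall>t\<ge>N. a t = 0" and bS: "\<forall>t\<ge>N. b t = 0" using a b by (auto simp: FS_def)
  have iff: "\<And>r. (sab \<and> (\<forall>t<N. d t = Ep N a b t + Q + r)) \<longleftrightarrow> (r = R0 - Q \<and> sab \<and> cons \<and> Q \<le> R0)"
  proof
    fix r assume h: "sab \<and> (\<forall>t<N. d t = Ep N a b t + Q + r)"
    then have d0: "d 0 = Ep N a b 0 + Q + r" using N by blast
    then have "R0 = Q + r" by (simp add: R0_def)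
    moreover have "\<forall>c<N. d c = R0 + Ep N a b c" using h \<open>R0 = Q + r\<close> by auto
    ultimately show "r = R0 - Q \<and> sab \<and> cons \<and> Q \<le> R0" using h d0 by (auto simp: cons_def)
  next
    fix r assume h: "r = R0 - Q \<and> sab \<and> cons \<and> Q \<le> R0"
    then show "sab \<and> (\<forall>t<N. d t = Ep N a b t + Q + r)" by (auto simp: cons_def)
  qed
  have rhs: "(\<Sum>r\<in>{..d 0}. if (a, b, r) \<in> rhs_index N s d then fps_nth (Fser N a b) r else 0)
       = (if sab \<and> cons \<and> Q \<le> R0 then fps_nth (Fser N a b) (R0 - Q) else 0)"
  proof -
    have "(\<Sum>r\<in>{..d 0}. if (a, b, r) \<in> rhs_index N s d then fps_nth (Fser N a b) r else 0)
        = (\<Sum>r\<in>{..d 0}. if r = R0 - Q then (if sab \<and> cons \<and> Q \<le> R0 then fps_nth (Fser N a b) r else 0) else 0)"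
      by (intro sum.cong refl) (use iff in \<open>auto simp: rhs_mem[OF N pm a b] sab_def Q_def\<close>)
    also have "\<dots> = (if sab \<and> cons \<and> Q \<le> R0 then fps_nth (Fser N a b) (R0 - Q) else 0)"
      by (simp add: R0_def)
    finally show ?thesis .
  qed
  let ?core = "{(TA, TB) \<in> PiE {..<N} (CA s a) \<times> PiE {..<N} (CB s b).
          (\<Sum>j<N. sum_mset (TA j)) + (\<Sum>j<N. sum_mset (TB j)) = R0}"
  have fib: "{x \<in> SS N s d. (szf N (fst x), szf N (snd x)) = (a, b)} = (if sab \<and> cons then ?core else {})"
  proof (intro equalityI subsetI)
    fix x assume x: "x \<in> {x \<in> SS N s d. (szf N (fst x), szf N (snd x)) = (a, b)}"
    then obtain TA TB where xe: "x = (TA, TB)" by (cases x)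
    have T: "(TA, TB) \<in> TT N s" and W: "\<forall>c<N. WT N TA TB c = d c" and za: "szf N TA = a" and zb: "szf N TB = b"
      using x xe by (auto simp: SS_def)
    have sa: "\<And>j. j < N \<Longrightarrow> size (TA j) = a j" using za by (auto simp: szf_def)
    have sb: "\<And>j. j < N \<Longrightarrow> size (TB j) = b j" using zb by (auto simp: szf_def)
    have TA: "TA \<in> PiE {..<N} (CA s a)" using T sa by (auto simp: TT_def PiE_def Pi_def CA_def Mset_def)
    have TB: "TB \<in> PiE {..<N} (CB s b)" using T sb by (auto simp: TT_def PiE_def Pi_def CB_def Mset_def)
    have "(\<Sum>j<N. size (TA j)) = (\<Sum>j<N. size (TB j))" using T by (simp add: TT_def)
    then have sab using sa sb unfolding sab_def by simp
    have W': "\<forall>c<N. Stot N TA TB + Ep N a b c = d c" using W za zb by (simp add: WT_split)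
    then have "d 0 = Stot N TA TB + Ep N a b 0" using N by simp
    then have "R0 = Stot N TA TB" by (simp add: R0_def)
    then have cons using W' \<open>d 0 = Stot N TA TB + Ep N a b 0\<close> unfolding cons_def by auto
    show "x \<in> (if sab \<and> cons then ?core else {})"
      using \<open>sab\<close> \<open>cons\<close> TA TB xe \<open>R0 = Stot N TA TB\<close> by (simp add: Stot_def)
  next
    fix x assume x: "x \<in> (if sab \<and> cons then ?core else {})"
    then have sab cons by (auto split: if_splits)
    obtain TA TB where xe: "x = (TA, TB)" by (cases x)
    have TA: "TA \<in> PiE {..<N} (CA s a)" and TB: "TB \<in> PiE {..<N} (CB s b)"
      and St: "Stot N TA TB = R0"
      using x xe \<open>sab\<close> \<open>cons\<close> by (auto simp: Stot_def)
    have sa: "\<And>j. j < N \<Longrightarrow> size (TA j) = a j"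
    proof -
      fix j assume "j < N"
      then have "TA j \<in> CA s a j" using TA by (simp add: PiE_mem)
      then show "size (TA j) = a j" by (simp add: CA_def Mset_def)
    qed
    have sb: "\<And>j. j < N \<Longrightarrow> size (TB j) = b j"
    proof -
      fix j assume "j < N"
      then have "TB j \<in> CB s b j" using TB by (simp add: PiE_mem)
      then show "size (TB j) = b j" by (simp add: CB_def Mset_def)
    qed
    have za: "szf N TA = a" using sa aS by (auto simp: szf_def fun_eq_iff)
    have zb: "szf N TB = b" using sb bS by (auto simp: szf_def fun_eq_iff)
    have "(\<Sum>j<N. size (TA j)) = (\<Sum>j<N. size (TB j))" using sa sb \<open>sab\<close> by (simp add: sab_def)
    moreover have "TA \<in> PiE {..<N} (\<lambda>j. {X. s (int j + 1) = 1 \<longrightarrow> (\<forall>q. count X q \<le> 1)})"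
      using TA by (auto simp: PiE_def Pi_def CA_def Mset_def)
    moreover have "TB \<in> PiE {..<N} (\<lambda>j. {X. s (int j) = 1 \<longrightarrow> (\<forall>q. count X q \<le> 1)})"
      using TB by (auto simp: PiE_def Pi_def CB_def Mset_def)
    ultimately have T: "(TA, TB) \<in> TT N s" by (simp add: TT_def)
    have "\<forall>c<N. WT N TA TB c = d c" using St za zb \<open>cons\<close> by (simp add: WT_split cons_def)
    then show "x \<in> {x \<in> SS N s d. (szf N (fst x), szf N (snd x)) = (a, b)}"
      using T xe za zb by (simp add: SS_def)
  qed
  have lhs: "real (card {x \<in> SS N s d. (szf N (fst x), szf N (snd x)) = (a, b)})
      = (if sab \<and> cons then (if R0 < Q then 0 else fps_nth (Fser N a b) (R0 - Q)) else 0)"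
    unfolding fib using card_core[of N s a b R0] by (simp add: Q_def)
  show ?thesis unfolding lhs rhs by auto
qed

lemma szf_FS:
  assumes N: "0 < N" and x: "(TA, TB) \<in> SS N s d"
  shows "szf N TA \<in> FS N (d 0)" "szf N TB \<in> FS N (d 0)"
  using SS_bounds[OF N x] by (auto simp: FS_def szf_def)

lemma rhs_sub:
  fixes s :: "int \<Rightarrow> int"
  assumes N: "0 < N" and pm: "\<forall>i. s i = 1 \<or> s i = -1"
  shows "rhs_index N s d \<subseteq> (\<lambda>((a, b), r). (a, b, r)) ` ((FS N (d 0) \<times> FS N (d 0)) \<times> {..d 0})"
proof
  fix x assume x: "x \<in> rhs_index N s d"
  then obtain a b r where xe: "x = (a, b, r)" by (cases x) auto
  have aS: "\<forall>t\<ge>N. a t = 0" and bS: "\<forall>t\<ge>N. b t = 0" and sab: "(\<Sum>j<N. a j) = (\<Sum>j<N. b j)"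
    and e: "int (d 0) = Eexp N a b 0 + Qexp N s a b + int r"
    using x xe N by (auto simp: rhs_index_def)
  have Ep0: "Ep N a b 0 = (\<Sum>j<N. a j)" by (simp add: Ep_def)
  have d0: "d 0 = (\<Sum>j<N. a j) + Qn N s a b + r"
    using e unfolding Eexp_Ep[OF N] Qexp_Qn[OF pm] Ep0 by linarith
  have "\<And>t. t < N \<Longrightarrow> a t \<le> d 0"
  proof -
    fix t assume "t < N"
    then have "a t \<le> (\<Sum>j<N. a j)" by (intro member_le_sum) auto
    then show "a t \<le> d 0" using d0 by linarith
  qed
  moreover have "\<And>t. t < N \<Longrightarrow> b t \<le> d 0"
  proof -
    fix t assume "t < N"
    then have "b t \<le> (\<Sum>j<N. b j)" by (intro member_le_sum) auto
    then show "b t \<le> d 0" using d0 sab by linarith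
  qed
  ultimately have "a \<in> FS N (d 0)" "b \<in> FS N (d 0)" using aS bS by (auto simp: FS_def)
  moreover have "r \<le> d 0" using d0 by linarith
  ultimately show "x \<in> (\<lambda>((a, b), r). (a, b, r)) ` ((FS N (d 0) \<times> FS N (d 0)) \<times> {..d 0})"
    using xe by (intro image_eqI[where x="((a, b), r)"]) auto
qed

theorem main_count:
  fixes s :: "int \<Rightarrow> int" and d :: "nat \<Rightarrow> nat"
  assumes N: "0 < N" and per: "\<forall>i. s (i + int N) = s i" and pm: "\<forall>i. s i = 1 \<or> s i = -1"
    and s0: "s 0 = -1"
  shows "((\<lambda>(a, b, r). fps_nth (Fser N a b) r) has_sum
            real (card {(lam, mu) \<in> Pset s 0 (-1). \<forall>c<N. wt_exp N 0 lam mu c = d c}))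
           (rhs_index N s d)"
proof -
  let ?F = "\<lambda>(a, b, r). fps_nth (Fser N a b) r"
  let ?AB = "FS N (d 0) \<times> FS N (d 0)"
  let ?h = "\<lambda>((a, b), r). (a, b, r)"
  let ?ABR = "?h ` (?AB \<times> {..d 0})"
  have finAB: "finite ?AB" by (simp add: FS_finite)
  have finABR: "finite ?ABR" using finAB by simp
  have sub: "rhs_index N s d \<subseteq> ?ABR" by (rule rhs_sub[OF N pm])
  have fin: "finite (rhs_index N s d)" using sub finABR by (rule finite_subset)
  have c1: "card {(lam, mu) \<in> Pset s 0 (-1). \<forall>c<N. wt_exp N 0 lam mu c = d c} = card (SS N s d)"
    unfolding count_reduce[OF N per pm s0] SS_def ..
  let ?g = "\<lambda>x. (szf N (fst x), szf N (snd x))"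
  have gS: "?g ` SS N s d \<subseteq> ?AB"
  proof
    fix y assume "y \<in> ?g ` SS N s d"
    then obtain TA TB where "(TA, TB) \<in> SS N s d" "y = ?g (TA, TB)" by auto
    then show "y \<in> ?AB" using szf_FS[OF N] by auto
  qed
  have "card (SS N s d) = (\<Sum>y\<in>?AB. card {x \<in> SS N s d. ?g x = y})"
    using sum.group[OF SS_finite[OF N] finAB gS, of "\<lambda>_. 1::nat"] by simp
  then have "real (card (SS N s d)) = (\<Sum>y\<in>?AB. real (card {x \<in> SS N s d. ?g x = y}))"
    by simp
  also have "\<dots> = (\<Sum>y\<in>?AB. \<Sum>r\<in>{..d 0}. if (fst y, snd y, r) \<in> rhs_index N s d then fps_nth (Fser N (fst y) (snd y)) r else 0)"
  proof (intro sum.cong refl)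
    fix y assume "y \<in> ?AB"
    then obtain a b where y: "y = (a, b)" "a \<in> FS N (d 0)" "b \<in> FS N (d 0)" by auto
    show "real (card {x \<in> SS N s d. ?g x = y}) = (\<Sum>r\<in>{..d 0}. if (fst y, snd y, r) \<in> rhs_index N s d then fps_nth (Fser N (fst y) (snd y)) r else 0)"
      unfolding y(1) fst_conv snd_conv using fiber_count[of N s a d b, OF N pm y(2) y(3)] by simp
  qed
  also have "\<dots> = (\<Sum>z\<in>?AB \<times> {..d 0}. (\<lambda>x. if x \<in> rhs_index N s d then ?F x else 0) (?h z))"
    by (subst sum.cartesian_product) (auto intro!: sum.cong simp: case_prod_beta)
  also have "\<dots> = (\<Sum>x\<in>?ABR. if x \<in> rhs_index N s d then ?F x else 0)"
  proof (rule sum.reindex[symmetric, unfolded comp_def])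
    show "inj_on ?h (?AB \<times> {..d 0})" by (auto simp: inj_on_def)
  qed
  also have "\<dots> = (\<Sum>x\<in>?ABR \<inter> rhs_index N s d. ?F x)"
    by (rule sum.inter_restrict[symmetric]) (rule finABR)
  also have "?ABR \<inter> rhs_index N s d = rhs_index N s d" using sub by blast
  finally have "real (card (SS N s d)) = sum ?F (rhs_index N s d)" .
  then show ?thesis unfolding c1 by (intro has_sum_finiteI[OF fin]) simp
qed

theorem lemma7p1:
  fixes m n N :: nat and s :: "int \<Rightarrow> int" and d :: "nat \<Rightarrow> nat"
  assumes "m \<noteq> n" and "N = m + n" and "N \<ge> 3"
    and "parity_seq N m s"
    and "s 0 = -1"
    and "\<forall>t\<ge>N. d t = 0"
  shows "((\<lambda>(a, b, r). fps_nth (Fser N a b) r) has_sum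
            real (card {(lam, mu) \<in> Pset s 0 (-1). \<forall>c<N. wt_exp N 0 lam mu c = d c}))
           (rhs_index N s d)"
proof -
  have N: "0 < N" using assms(3) by simp
  have pm: "\<forall>i. s i = 1 \<or> s i = -1" and per: "\<forall>i. s (i + int N) = s i"
    using assms(4) by (auto simp: parity_seq_def)
  show ?thesis by (rule main_count[OF N per pm assms(5)])
qed

end
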